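(* A tree $T$ is minor-minimal for the spectator floor (i.e., no proper minor of $T$ has the same spectator floor as $T$) if and only if no edge lies in the intersection of all diametric paths in $T$.
   Context: All graphs are finite, have at least one vertex, have no loops, and may have multiple (parallel) edges. A diametric path is a path whose length (number of edges) equals the diameter of the graph. A minor of $H$ is any graph obtained from $H$ by a sequence of: deleting an isolated vertex, deleting an edge, contracting an edge that has no edge parallel to it. A unique shortest path is a shortest $u$–$v$ path $P$ such that every $u$–$v$ path with the same number of vertices is identical to $P$, where two paths with different edge sequences are different even if their vertex sequences agree; a single vertex is a unique shortest path. The parade number $\mathrm{usp}(G)$ is the largest number of vertices of a unique shortest path in $G$. The spectator number is $\mathrm{sp}(G)=|V(G)|-\mathrm{usp}(G)$. The spectator floor $\lfloor \mathrm{sp}\rfloor(G)$ is the minimum of $\mathrm{sp}(H)$ over all graphs $H$ of which $G$ is a minor. *)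

theory Defs
  imports Main
begin

text \<open>Finite multigraphs (no loops, parallel edges allowed). Every finite
  multigraph is isomorphic to one of this form.\<close>

record mgraph =
  verts :: "nat set"
  edges :: "nat set"
  inc :: "nat \<Rightarrow> nat set"

definition wf_graph :: "mgraph \<Rightarrow> bool" where
  "wf_graph G \<longleftrightarrow> finite (verts G) \<and> verts G \<noteq> {} \<and> finite (edges G) \<and>
     (\<forall>e\<in>edges G. inc G e \<subseteq> verts G \<and> card (inc G e) = 2)"

definition graph_iso :: "mgraph \<Rightarrow> mgraph \<Rightarrow> bool" where
  "graph_iso G H \<longleftrightarrow> (\<exists>f g. bij_betw f (verts G) (verts H) \<and> bij_betw g (edges G) (edges H) \<and>
     (\<forall>e\<in>edges G. inc H (g e) = f ` inc G e))"

definition minor_step :: "mgraph \<Rightarrow> mgraph \<Rightarrow> bool" where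
  "minor_step H G \<longleftrightarrow>
     (\<exists>v\<in>verts H. (\<forall>e\<in>edges H. v \<notin> inc H e) \<and> verts H \<noteq> {v} \<and>
        G = H\<lparr>verts := verts H - {v}\<rparr>)
   \<or> (\<exists>e\<in>edges H. G = H\<lparr>edges := edges H - {e}\<rparr>)
   \<or> (\<exists>e\<in>edges H. \<exists>u w. inc H e = {u, w} \<and> u \<noteq> w \<and>
        (\<forall>f\<in>edges H. f \<noteq> e \<longrightarrow> inc H f \<noteq> inc H e) \<and>
        G = \<lparr>verts = verts H - {w}, edges = edges H - {e},
             inc = (\<lambda>f. (\<lambda>x. if x = w then u else x) ` inc H f)\<rparr>)"

definition is_minor :: "mgraph \<Rightarrow> mgraph \<Rightarrow> bool" where
  "is_minor G H \<longleftrightarrow> (\<exists>G'. minor_step\<^sup>*\<^sup>* H G' \<and> graph_iso G G')"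

definition is_proper_minor :: "mgraph \<Rightarrow> mgraph \<Rightarrow> bool" where
  "is_proper_minor G H \<longleftrightarrow> (\<exists>G'. minor_step\<^sup>+\<^sup>+ H G' \<and> graph_iso G G')"

definition is_path :: "mgraph \<Rightarrow> nat list \<Rightarrow> nat list \<Rightarrow> bool" where
  "is_path G vs es \<longleftrightarrow> vs \<noteq> [] \<and> distinct vs \<and> set vs \<subseteq> verts G \<and>
     length vs = length es + 1 \<and>
     (\<forall>i<length es. es ! i \<in> edges G \<and> inc G (es ! i) = {vs ! i, vs ! Suc i})"

definition is_usp :: "mgraph \<Rightarrow> nat list \<Rightarrow> nat list \<Rightarrow> bool" where
  "is_usp G vs es \<longleftrightarrow> is_path G vs es \<and>
     (\<forall>vs' es'. is_path G vs' es' \<and> hd vs' = hd vs \<and> last vs' = last vs \<longrightarrow>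
        length vs \<le> length vs') \<and>
     (\<forall>vs' es'. is_path G vs' es' \<and> hd vs' = hd vs \<and> last vs' = last vs \<and>
        length vs' = length vs \<longrightarrow> vs' = vs \<and> es' = es)"

definition usp :: "mgraph \<Rightarrow> nat" where
  "usp G = Max {length vs | vs es. is_usp G vs es}"

definition sp :: "mgraph \<Rightarrow> nat" where
  "sp G = card (verts G) - usp G"

definition sfloor :: "mgraph \<Rightarrow> nat" where
  "sfloor G = (LEAST k. \<exists>H. wf_graph H \<and> is_minor G H \<and> sp H = k)"

definition connected_graph :: "mgraph \<Rightarrow> bool" where
  "connected_graph G \<longleftrightarrow> (\<forall>u\<in>verts G. \<forall>v\<in>verts G.
     \<exists>vs es. is_path G vs es \<and> hd vs = u \<and> last vs = v)"

definition is_cycle :: "mgraph \<Rightarrow> nat list \<Rightarrow> nat list \<Rightarrow> bool" where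
  "is_cycle G vs es \<longleftrightarrow> length vs \<ge> 2 \<and> distinct vs \<and> set vs \<subseteq> verts G \<and>
     length es = length vs \<and> distinct es \<and>
     (\<forall>i<length es. es ! i \<in> edges G \<and>
        inc G (es ! i) = {vs ! i, vs ! ((Suc i) mod length vs)})"

definition is_tree :: "mgraph \<Rightarrow> bool" where
  "is_tree G \<longleftrightarrow> wf_graph G \<and> connected_graph G \<and> \<not> (\<exists>vs es. is_cycle G vs es)"

definition dist :: "mgraph \<Rightarrow> nat \<Rightarrow> nat \<Rightarrow> nat" where
  "dist G u v = (LEAST n. \<exists>vs es. is_path G vs es \<and> hd vs = u \<and> last vs = v \<and> length es = n)"

definition diameter :: "mgraph \<Rightarrow> nat" where
  "diameter G = Max {dist G u v | u v. u \<in> verts G \<and> v \<in> verts G}"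

definition diametric_path :: "mgraph \<Rightarrow> nat list \<Rightarrow> nat list \<Rightarrow> bool" where
  "diametric_path G vs es \<longleftrightarrow> is_path G vs es \<and> length es = diameter G"

definition sfloor_minor_minimal :: "mgraph \<Rightarrow> bool" where
  "sfloor_minor_minimal G \<longleftrightarrow>
     (\<forall>H. wf_graph H \<and> is_proper_minor H G \<longrightarrow> sfloor H \<noteq> sfloor G)"

end

theory Submission
  imports Defs
begin



inductive walkn :: "mgraph \<Rightarrow> nat \<Rightarrow> nat \<Rightarrow> nat \<Rightarrow> bool" for G where
  w0: "a \<in> verts G \<Longrightarrow> walkn G a a 0"
| wS: "a \<in> verts G \<Longrightarrow> g \<in> edges G \<Longrightarrow> inc G g = {a, c} \<Longrightarrow> walkn G c b n \<Longrightarrow> walkn G a b (Suc n)"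

definition conn :: "mgraph \<Rightarrow> nat \<Rightarrow> nat \<Rightarrow> bool" where
  "conn G a b \<longleftrightarrow> (\<exists>n. walkn G a b n)"

definition del :: "mgraph \<Rightarrow> nat set \<Rightarrow> mgraph" where
  "del G F = G\<lparr>edges := edges G - F\<rparr>"

lemma walkn_verts: "walkn G a b n \<Longrightarrow> a \<in> verts G \<and> b \<in> verts G"
  by (induction rule: walkn.induct) auto

lemma walkn_trans: "walkn G a b m \<Longrightarrow> walkn G b c n \<Longrightarrow> walkn G a c (m + n)"
  by (induction rule: walkn.induct) (auto intro: walkn.intros)

lemma walkn_edge: "g \<in> edges G \<Longrightarrow> inc G g = {a, c} \<Longrightarrow> a \<in> verts G \<Longrightarrow> c \<in> verts G \<Longrightarrow> walkn G a c 1"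
  using wS[OF _ _ _ w0] by (metis One_nat_def)

lemma walkn_sym: "walkn G a b n \<Longrightarrow> walkn G b a n"
proof (induction rule: walkn.induct)
  case (w0 a) then show ?case by (rule walkn.w0)
next
  case (wS a g c b n)
  have "walkn G c a 1" using wS walkn_edge[of g G c a] walkn_verts[OF wS(4)] by (auto simp: insert_commute)
  from walkn_trans[OF wS(5) this] show ?case by simp
qed

lemma conn_refl: "a \<in> verts G \<Longrightarrow> conn G a a"
  unfolding conn_def by (auto intro: w0)
lemma conn_sym: "conn G a b \<Longrightarrow> conn G b a"
  unfolding conn_def by (auto intro: walkn_sym)
lemma conn_trans: "conn G a b \<Longrightarrow> conn G b c \<Longrightarrow> conn G a c"
  unfolding conn_def by (auto intro: walkn_trans)
lemma conn_verts: "conn G a b \<Longrightarrow> a \<in> verts G \<and> b \<in> verts G"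
  unfolding conn_def using walkn_verts by blast
lemma conn_edge: "g \<in> edges G \<Longrightarrow> inc G g = {a, c} \<Longrightarrow> a \<in> verts G \<Longrightarrow> c \<in> verts G \<Longrightarrow> conn G a c"
  unfolding conn_def using walkn_edge by blast

lemma walkn_mono: "walkn G a b n \<Longrightarrow> verts G \<subseteq> verts H \<Longrightarrow> edges G \<subseteq> edges H \<Longrightarrow>
   (\<forall>g\<in>edges G. inc H g = inc G g) \<Longrightarrow> walkn H a b n"
  by (induction rule: walkn.induct) (auto intro: walkn.intros)

lemma walkn_del_mono: "walkn (del G F) a b n \<Longrightarrow> walkn G a b n"
  by (erule walkn_mono) (auto simp: del_def)
lemma conn_del_mono: "conn (del G F) a b \<Longrightarrow> conn G a b"
  unfolding conn_def using walkn_del_mono by blast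
lemma conn_del_anti: "conn (del G F) a b \<Longrightarrow> F' \<subseteq> F \<Longrightarrow> conn (del G F') a b"
proof -
  assume a: "conn (del G F) a b" "F' \<subseteq> F"
  then obtain n where "walkn (del G F) a b n" unfolding conn_def by blast
  then have "walkn (del G F') a b n" by (rule walkn_mono) (use a(2) in \<open>auto simp: del_def\<close>)
  then show ?thesis unfolding conn_def by blast
qed

lemma path_walkn: "is_path G vs es \<Longrightarrow> walkn G (hd vs) (last vs) (length es)"
proof (induction es arbitrary: vs)
  case Nil
  then obtain a where "vs = [a]" unfolding is_path_def by (cases vs) auto
  then show ?case using Nil by (auto simp: is_path_def intro: w0)
next
  case (Cons g es)
  then obtain a c vr where vs: "vs = a # c # vr" unfolding is_path_def
    by (cases vs; cases "tl vs") auto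
  have p: "is_path G (c # vr) es" using Cons.prems unfolding is_path_def vs
    by (auto simp: nth_Cons_Suc)
  have "g \<in> edges G" "inc G g = {a, c}" using Cons.prems unfolding is_path_def vs by force+
  moreover have "a \<in> verts G" using Cons.prems unfolding is_path_def vs by auto
  ultimately show ?case using Cons.IH[OF p] vs by (auto intro: wS)
qed

lemma path_conn: "is_path G vs es \<Longrightarrow> conn G (hd vs) (last vs)"
  using path_walkn conn_def by blast

lemma path_take: "is_path G vs es \<Longrightarrow> k < length vs \<Longrightarrow> is_path G (take (Suc k) vs) (take k es)"
  unfolding is_path_def by (auto dest: in_set_takeD simp: min_def)

lemma path_drop: "is_path G vs es \<Longrightarrow> k < length vs \<Longrightarrow> is_path G (drop k vs) (drop k es)"
  unfolding is_path_def by (auto dest: in_set_dropD simp: add.commute[of k] add_Suc_right[symmetric] simp del: add_Suc_right)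

lemma path_Cons: "is_path G vs es \<Longrightarrow> a \<in> verts G \<Longrightarrow> a \<notin> set vs \<Longrightarrow> g \<in> edges G \<Longrightarrow> inc G g = {a, hd vs}
   \<Longrightarrow> is_path G (a # vs) (g # es)"
  unfolding is_path_def by (auto simp: nth_Cons' hd_conv_nth)

lemma walkn_path: "walkn G a b n \<Longrightarrow> \<exists>vs es. is_path G vs es \<and> hd vs = a \<and> last vs = b \<and> length es \<le> n"
proof (induction rule: walkn.induct)
  case (w0 a)
  then show ?case by (intro exI[of _ "[a]"] exI[of _ "[]"]) (auto simp: is_path_def)
next
  case (wS a g c b n)
  then obtain vs es where p: "is_path G vs es" "hd vs = c" "last vs = b" "length es \<le> n" by blast
  show ?case
  proof (cases "a \<in> set vs")
    case False
    have "is_path G (a # vs) (g # es)" using path_Cons[OF p(1) wS(1) False wS(2)] wS(3) p(2) by simp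
    then show ?thesis using p False
      by (intro exI[of _ "a # vs"] exI[of _ "g # es"]) (auto simp: is_path_def)
  next
    case True
    then obtain k where k: "k < length vs" "vs ! k = a" by (auto simp: in_set_conv_nth)
    have "is_path G (drop k vs) (drop k es)" using path_drop[OF p(1) k(1)] .
    moreover have "hd (drop k vs) = a" using k by (simp add: hd_drop_conv_nth)
    moreover have "last (drop k vs) = b" using k p by simp
    moreover have "length (drop k es) \<le> Suc n" using p by simp
    ultimately show ?thesis by blast
  qed
qed




lemma path_distinct_edges: "is_path G vs es \<Longrightarrow> distinct es"
proof -
  assume p: "is_path G vs es"
  show ?thesis unfolding distinct_conv_nth
  proof (intro allI impI)
    fix i j assume ij: "i < length es" "j < length es" "i \<noteq> j"
    show "es ! i \<noteq> es ! j"
    proof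
      assume eq: "es ! i = es ! j"
      have "inc G (es ! i) = {vs ! i, vs ! Suc i}" "inc G (es ! j) = {vs ! j, vs ! Suc j}"
        using p ij unfolding is_path_def by auto
      then have "{vs ! i, vs ! Suc i} = {vs ! j, vs ! Suc j}" using eq by simp
      moreover have "distinct vs" "length vs = length es + 1" using p unfolding is_path_def by auto
      ultimately show False using ij
        by (auto simp: doubleton_eq_iff nth_eq_iff_index_eq)
    qed
  qed
qed

lemma path_del: "is_path G vs es \<Longrightarrow> set es \<inter> F = {} \<Longrightarrow> is_path (del G F) vs es"
  unfolding is_path_def del_def by (auto simp: disjoint_iff)

lemma path_del_rev: "is_path (del G F) vs es \<Longrightarrow> is_path G vs es \<and> set es \<inter> F = {}"
  unfolding is_path_def del_def by (auto simp: in_set_conv_nth)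

lemma path_hd_in: "is_path G vs es \<Longrightarrow> hd vs \<in> verts G"
  unfolding is_path_def by (cases vs) auto
lemma path_last_in: "is_path G vs es \<Longrightarrow> last vs \<in> verts G"
  unfolding is_path_def by (cases vs rule: rev_cases) auto

lemma path_sub_conn:
  assumes p: "is_path G vs es" and i: "i < length es"
  shows "conn (del G {es ! i}) (hd vs) (vs ! i) \<and> conn (del G {es ! i}) (vs ! Suc i) (last vs)"
proof
  have len: "length vs = length es + 1" using p unfolding is_path_def by auto
  have d: "distinct es" using path_distinct_edges[OF p] .
  have p1: "is_path G (take (Suc i) vs) (take i es)" using path_take[OF p] i len by simp
  have "es ! i \<notin> set (take i es)" using d i by (simp add: in_set_conv_nth nth_eq_iff_index_eq)
  then have "is_path (del G {es ! i}) (take (Suc i) vs) (take i es)" using path_del[OF p1] by auto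
  from path_conn[OF this] show "conn (del G {es ! i}) (hd vs) (vs ! i)" using i len
    by (simp add: hd_conv_nth last_conv_nth p[unfolded is_path_def] min_def)
  have p2: "is_path G (drop (Suc i) vs) (drop (Suc i) es)" using path_drop[OF p] i len by simp
  have "es ! i \<notin> set (drop (Suc i) es)" using d i
    by (auto simp: in_set_conv_nth nth_eq_iff_index_eq)
  then have "is_path (del G {es ! i}) (drop (Suc i) vs) (drop (Suc i) es)" using path_del[OF p2] by auto
  from path_conn[OF this] show "conn (del G {es ! i}) (vs ! Suc i) (last vs)" using i len
    by (simp add: hd_drop_conv_nth)
qed

lemma path_eq_edges:
  "is_path G vs es \<Longrightarrow> is_path G vs' es' \<Longrightarrow> hd vs = hd vs' \<Longrightarrow> set es = set es' \<Longrightarrow> vs = vs' \<and> es = es'"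
proof (induction es arbitrary: vs vs' es')
  case Nil
  then have "es' = []" by simp
  then show ?case using Nil unfolding is_path_def by (cases vs; cases vs') auto
next
  case (Cons f r)
  obtain a c vr where vs: "vs = a # c # vr" using Cons.prems(1) unfolding is_path_def
    by (cases vs; cases "tl vs") auto
  obtain f' r' where es': "es' = f' # r'" using Cons.prems(4) by (cases es') auto
  obtain c' vr' where vs': "vs' = a # c' # vr'" using Cons.prems(2,3) vs es' unfolding is_path_def
    by (cases vs'; cases "tl vs'") auto
  have incf': "inc G f' = {a, c'}" using Cons.prems(2) unfolding vs' es' is_path_def by force
  have "f' \<in> set (f # r)" using Cons.prems(4) es' by auto
  then obtain k where k: "k < length (f # r)" "(f # r) ! k = f'" by (metis in_set_conv_nth)
  have pk: "inc G f' = {vs ! k, vs ! Suc k}" using Cons.prems(1) k unfolding is_path_def by auto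
  have dv: "distinct vs" and lv: "length vs = length (f#r) + 1" using Cons.prems(1) unfolding is_path_def by auto
  have "a \<in> {vs ! k, vs ! Suc k}" using pk incf' by auto
  moreover have "vs ! 0 = a" using vs by simp
  ultimately have "k = 0"
  proof -
    assume a1: "a \<in> {vs ! k, vs ! Suc k}" and a2: "vs ! 0 = a"
    have kk: "k < length vs" "Suc k < length vs" using lv k by auto
    show "k = 0"
    proof (cases "a = vs ! k")
      case True
      have l0: "0 < length vs" using kk by linarith
      show ?thesis using nth_eq_iff_index_eq[OF dv l0 kk(1)] a2 True by simp
    next
      case False then have "a = vs ! Suc k" using a1 by auto
      moreover have l0: "0 < length vs" using kk by linarith
      ultimately show ?thesis using nth_eq_iff_index_eq[OF dv l0 kk(2)] a2 by simp
    qed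
  qed
  then have ff: "f' = f" using k by simp
  have "inc G f = {a, c}" using Cons.prems(1) unfolding vs is_path_def by force
  moreover have "a \<noteq> c" "a \<noteq> c'" using dv vs Cons.prems(2) vs' unfolding is_path_def by auto
  ultimately have cc: "c' = c" using incf' ff by (auto simp: doubleton_eq_iff)
  have d1: "distinct (f # r)" using path_distinct_edges[OF Cons.prems(1)] .
  have d2: "distinct (f' # r')" using path_distinct_edges[OF Cons.prems(2)] es' by simp
  have "set r = set r'" using Cons.prems(4) es' ff d1 d2
    by (metis Diff_insert_absorb distinct.simps(2) list.simps(15))
  moreover have "is_path G (c # vr) r" using Cons.prems(1) unfolding vs is_path_def
    by (auto simp: nth_Cons_Suc)
  moreover have "is_path G (c # vr') r'" using Cons.prems(2) unfolding vs' es' is_path_def cc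
    by (auto simp: nth_Cons_Suc)
  ultimately have "c # vr = c # vr' \<and> r = r'" using Cons.IH[of "c # vr" "c # vr'" r'] by simp
  then show ?case using vs vs' es' ff cc by simp
qed

lemma bridge_usp:
  assumes p: "is_path K vs es"
    and br: "\<forall>i<length es. \<not> conn (del K {es ! i}) (vs ! i) (vs ! Suc i)"
  shows "is_usp K vs es"
proof -
  have key: "set es \<subseteq> set es'" if p': "is_path K vs' es'" "hd vs' = hd vs" "last vs' = last vs" for vs' es'
  proof
    fix f assume "f \<in> set es"
    then obtain i where i: "i < length es" "es ! i = f" by (auto simp: in_set_conv_nth)
    show "f \<in> set es'"
    proof (rule ccontr)
      assume "f \<notin> set es'"
      then have "is_path (del K {f}) vs' es'" using path_del[OF p'(1)] by auto
      then have c2: "conn (del K {f}) (hd vs) (last vs)" using path_conn p' by metis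
      have c1: "conn (del K {f}) (hd vs) (vs ! i)" "conn (del K {f}) (vs ! Suc i) (last vs)"
        using path_sub_conn[OF p i(1)] i by auto
      have "conn (del K {f}) (vs ! i) (vs ! Suc i)"
        using conn_trans[OF conn_trans[OF conn_sym[OF c1(1)] c2] conn_sym[OF c1(2)]] .
      then show False using br i by auto
    qed
  qed
  have le: "length es \<le> length es'" if p': "is_path K vs' es'" "hd vs' = hd vs" "last vs' = last vs" for vs' es'
  proof -
    have "card (set es) \<le> card (set es')" using key[OF p'] by (simp add: card_mono)
    then show ?thesis using path_distinct_edges[OF p] path_distinct_edges[OF p'(1)]
      by (simp add: distinct_card)
  qed
  show ?thesis unfolding is_usp_def
  proof (intro conjI)
    show "is_path K vs es" by fact
    show "\<forall>vs' es'. is_path K vs' es' \<and> hd vs' = hd vs \<and> last vs' = last vs \<longrightarrow> length vs \<le> length vs'"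
    proof (intro allI impI)
    fix vs' es' assume a: "is_path K vs' es' \<and> hd vs' = hd vs \<and> last vs' = last vs"
    then show "length vs \<le> length vs'" using le[of vs' es'] p unfolding is_path_def by auto
    qed
  next
    show "\<forall>vs' es'. is_path K vs' es' \<and> hd vs' = hd vs \<and> last vs' = last vs \<and> length vs' = length vs \<longrightarrow> vs' = vs \<and> es' = es"
    proof (intro allI impI)
    fix vs' es' assume a: "is_path K vs' es' \<and> hd vs' = hd vs \<and> last vs' = last vs \<and> length vs' = length vs"
    then have "length es' = length es" using p unfolding is_path_def by auto
    then have "set es = set es'" using key[of vs' es'] a path_distinct_edges[OF p] path_distinct_edges[of K vs' es']
      by (metis card_subset_eq distinct_card finite_set)
    then show "vs' = vs \<and> es' = es" using path_eq_edges[OF p, of vs' es'] a by auto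
    qed
  qed
qed

lemma acyclic_bridge:
  assumes nc: "\<not> (\<exists>vs es. is_cycle G vs es)" and g: "g \<in> edges G" "inc G g = {x, y}" "x \<noteq> y"
  shows "\<not> conn (del G {g}) x y"
proof
  assume "conn (del G {g}) x y"
  then obtain n where "walkn (del G {g}) x y n" unfolding conn_def by blast
  from walkn_path[OF this] obtain vs es where p: "is_path (del G {g}) vs es" "hd vs = x" "last vs = y" by blast
  from path_del_rev[OF p(1)] have p1: "is_path G vs es" and ge: "g \<notin> set es" by auto
  have len: "length vs = length es + 1" "distinct vs" "vs \<noteq> []" using p1 unfolding is_path_def by auto
  have "length vs \<ge> 2"
  proof (rule ccontr)
    assume "\<not> 2 \<le> length vs" moreover have "length vs \<noteq> 0" using len(3) by simp
    ultimately have "length vs = 1" by linarith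
    then have "hd vs = last vs" by (cases vs) auto
    then show False using p g by simp
  qed
  have "is_cycle G vs (es @ [g])"
    unfolding is_cycle_def
  proof (intro conjI)
    show "2 \<le> length vs" by fact
    show "distinct vs" using len by simp
    show "set vs \<subseteq> verts G" using p1 unfolding is_path_def by simp
    show "length (es @ [g]) = length vs" using len by simp
    show "distinct (es @ [g])" using path_distinct_edges[OF p1] ge by simp
    show "\<forall>i<length (es @ [g]). (es @ [g]) ! i \<in> edges G \<and> inc G ((es @ [g]) ! i) = {vs ! i, vs ! (Suc i mod length vs)}"
    proof (intro allI impI)
    fix i assume i: "i < length (es @ [g])"
    show "(es @ [g]) ! i \<in> edges G \<and> inc G ((es @ [g]) ! i) = {vs ! i, vs ! (Suc i mod length vs)}"
    proof (cases "i < length es")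
      case True
      then show ?thesis using p1 len unfolding is_path_def by (auto simp: nth_append)
    next
      case False
      then have ie: "i = length es" using i by simp
      have "vs ! i = y" using p(3) len ie by (simp add: last_conv_nth)
      moreover have "vs ! (Suc i mod length vs) = x" using p(2) len ie by (simp add: hd_conv_nth)
      ultimately show ?thesis using g ie by (auto simp: nth_append insert_commute)
    qed
    qed
  qed
  then show False using nc by blast
qed




definition sig :: "nat \<Rightarrow> nat \<Rightarrow> nat \<Rightarrow> nat" where
  "sig u w x = (if x = w then u else x)"

definition contr :: "mgraph \<Rightarrow> nat \<Rightarrow> nat \<Rightarrow> nat \<Rightarrow> mgraph" where
  "contr H u w e = \<lparr>verts = verts H - {w}, edges = edges H - {e},
             inc = (\<lambda>f. (\<lambda>x. if x = w then u else x) ` inc H f)\<rparr>"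

lemma contr_simps: "verts (contr H u w e) = verts H - {w}" "edges (contr H u w e) = edges H - {e}"
  "inc (contr H u w e) f = sig u w ` inc H f"
  unfolding contr_def sig_def by auto

lemma del_simps: "verts (del G F) = verts G" "edges (del G F) = edges G - F" "inc (del G F) = inc G"
  unfolding del_def by auto

lemma del_contr: "del (contr H u w e) F = contr (del H F) u w e"
proof -
  have "edges H - {e} - F = edges H - F - {e}" by blast
  then show ?thesis unfolding del_def contr_def by simp
qed

lemma del_del: "del (del G F) F' = del G (F \<union> F')"
proof -
  have "edges G - F - F' = edges G - (F \<union> F')" by blast
  then show ?thesis unfolding del_def by simp
qed

lemma wf_del: "wf_graph G \<Longrightarrow> wf_graph (del G F)"
  unfolding wf_graph_def del_def by auto

lemma card2_obtain: "card A = 2 \<Longrightarrow> \<exists>x y. A = {x, y} \<and> x \<noteq> y"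
  by (metis card_2_iff)

lemma wf_inc: "wf_graph G \<Longrightarrow> g \<in> edges G \<Longrightarrow> \<exists>x y. inc G g = {x, y} \<and> x \<noteq> y \<and> x \<in> verts G \<and> y \<in> verts G"
  unfolding wf_graph_def using card2_obtain by (metis insert_subset)

lemma sig_simps: "sig u w w = u" "x \<noteq> w \<Longrightarrow> sig u w x = x"
  unfolding sig_def by auto

lemma sig_in: "x \<in> verts H \<Longrightarrow> u \<in> verts H \<Longrightarrow> u \<noteq> w \<Longrightarrow> sig u w x \<in> verts H - {w}"
  unfolding sig_def by auto

lemma sig_eq: "sig u w x = sig u w y \<Longrightarrow> x \<noteq> y \<Longrightarrow> u \<noteq> w \<Longrightarrow> {x, y} = {u, w}"
  unfolding sig_def by (auto split: if_splits)

locale contr_setup =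
  fixes H u w e
  assumes wf: "wf_graph H" and e: "e \<in> edges H" and ince: "inc H e = {u, w}" and uw: "u \<noteq> w"
begin

lemma u_in: "u \<in> verts H" and w_in: "w \<in> verts H"
  using wf e ince unfolding wf_graph_def by auto

lemma walk_uw: "walkn H u w 1" "walkn H w u 1"
  using walkn_edge[OF e ince u_in w_in] walkn_edge[OF e _ w_in u_in] ince by (auto simp: insert_commute)

lemma project_walk: "walkn H a b n \<Longrightarrow> \<exists>m\<le>n. walkn (contr H u w e) (sig u w a) (sig u w b) m"
proof (induction rule: walkn.induct)
  case (w0 a)
  then show ?case using sig_in[OF _ u_in uw] by (auto intro!: walkn.w0 simp: contr_simps)
next
  case (wS a g c b n)
  then obtain m where m: "m \<le> n" "walkn (contr H u w e) (sig u w c) (sig u w b) m" by blast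
  show ?case
  proof (cases "g = e")
    case True
    then have "{a, c} = {u, w}" using wS ince by simp
    then have "sig u w a = sig u w c" unfolding sig_def using uw by (auto simp: doubleton_eq_iff)
    then show ?thesis using m by (intro exI[of _ m]) auto
  next
    case False
    have "inc (contr H u w e) g = {sig u w a, sig u w c}" using wS by (simp add: contr_simps)
    moreover have "g \<in> edges (contr H u w e)" using wS False by (simp add: contr_simps)
    moreover have "sig u w a \<in> verts (contr H u w e)" using sig_in[OF wS(1)] u_in uw wS
      by (simp add: contr_simps)
    ultimately show ?thesis using m by (intro exI[of _ "Suc m"]) (auto intro: walkn.wS)
  qed
qed

lemma project_conn: "conn H a b \<Longrightarrow> conn (contr H u w e) (sig u w a) (sig u w b)"
  unfolding conn_def using project_walk by blast

lemma path_tl: "is_path G (c # c1 # vr) (g # r) \<Longrightarrow> is_path G (c1 # vr) r"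
  unfolding is_path_def by (auto simp: nth_Cons_Suc)

lemma lift_path: "is_path (contr H u w e) vs es \<Longrightarrow> c0 \<in> verts H \<Longrightarrow> d0 \<in> verts H \<Longrightarrow>
   sig u w c0 = hd vs \<Longrightarrow> sig u w d0 = last vs \<Longrightarrow>
   \<exists>n \<le> length es + (if u \<in> set vs then 1 else 0). walkn H c0 d0 n"
proof (induction es arbitrary: vs c0)
  case Nil
  then obtain c where vs: "vs = [c]" unfolding is_path_def by (cases vs) auto
  show ?case
  proof (cases "c0 = d0")
    case True then show ?thesis using Nil by (intro exI[of _ 0]) (auto intro: w0)
  next
    case False
    then have cd: "{c0, d0} = {u, w}" using sig_eq[of u w c0 d0] Nil vs uw by simp
    have "c0 = u \<or> c0 = w" using cd by auto
    then have "sig u w c0 = u" using uw unfolding sig_def by auto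
    then have "c = u" using Nil vs by simp
    moreover have "walkn H c0 d0 1" using cd walk_uw False by (auto simp: doubleton_eq_iff)
    ultimately show ?thesis using vs by (intro exI[of _ 1]) simp
  qed
next
  case (Cons g r)
  obtain c c1 vr where vs: "vs = c # c1 # vr" using Cons.prems(1) unfolding is_path_def
    by (cases vs; cases "tl vs") auto
  have pt: "is_path (contr H u w e) (c1 # vr) r" using path_tl Cons.prems(1) vs by blast
  have "\<forall>i<length (g # r). (g # r) ! i \<in> edges (contr H u w e) \<and> inc (contr H u w e) ((g # r) ! i) = {vs ! i, vs ! Suc i}"
    using Cons.prems(1) unfolding is_path_def by blast
  then have "g \<in> edges (contr H u w e) \<and> inc (contr H u w e) g = {vs ! 0, vs ! Suc 0}" by fastforce
  then have gE: "g \<in> edges H - {e}" and ig: "sig u w ` inc H g = {c, c1}"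
    using vs by (simp_all add: contr_simps)
  obtain x y where xy: "inc H g = {x, y}" "x \<noteq> y" "x \<in> verts H" "y \<in> verts H"
    using wf_inc[OF wf] gE by blast
  have "{sig u w x, sig u w y} = {c, c1}" using ig xy(1) by simp
  then have "(sig u w x = c \<and> sig u w y = c1) \<or> (sig u w x = c1 \<and> sig u w y = c)"
    by (simp add: doubleton_eq_iff)
  then obtain x' y' where xy': "inc H g = {x', y'}" "sig u w x' = c" "sig u w y' = c1"
    "x' \<in> verts H" "y' \<in> verts H"
  proof
    assume "sig u w x = c \<and> sig u w y = c1" then show ?thesis using that[of x y] xy by blast
  next
    assume "sig u w x = c1 \<and> sig u w y = c" then show ?thesis using that[of y x] xy by (simp add: insert_commute)
  qed
  have "last (c1 # vr) = last vs" using vs by simp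
  then obtain n' where n': "n' \<le> length r + (if u \<in> set (c1 # vr) then 1 else 0)" "walkn H y' d0 n'"
    using Cons.IH[OF pt xy'(5) Cons.prems(3)] xy'(3) Cons.prems(5) by auto
  have g1: "walkn H x' y' 1" using walkn_edge[OF _ xy'(1) xy'(4,5)] gE by auto
  have dist: "c \<notin> set (c1 # vr)" using Cons.prems(1) vs unfolding is_path_def by auto
  have hc: "sig u w c0 = c" using Cons.prems(4) vs by simp
  obtain k where k: "k \<le> (if c = u then 1 else 0)" "walkn H c0 x' k"
  proof (cases "c0 = x'")
    case True then show ?thesis using that[of 0] xy'(4) by (auto intro: w0)
  next
    case False
    have cw: "{c0, x'} = {u, w}" using sig_eq[of u w c0 x'] hc xy'(2) False uw by simp
    then have "c = u" using hc uw unfolding sig_def by (auto simp: doubleton_eq_iff)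
    moreover have "walkn H c0 x' 1" using cw walk_uw by (auto simp: doubleton_eq_iff)
    ultimately show ?thesis using that[of 1] by simp
  qed
  have "walkn H c0 d0 (k + (1 + n'))" using walkn_trans[OF k(2) walkn_trans[OF g1 n'(2)]] .
  moreover have "k + (1 + n') \<le> length (g # r) + (if u \<in> set vs then 1 else 0)"
    using k(1) n'(1) dist vs by (auto split: if_splits)
  ultimately show ?case by blast
qed

lemma lift_conn: "conn (contr H u w e) a b \<Longrightarrow> c0 \<in> verts H \<Longrightarrow> d0 \<in> verts H \<Longrightarrow>
   sig u w c0 = a \<Longrightarrow> sig u w d0 = b \<Longrightarrow> conn H c0 d0"
  unfolding conn_def using walkn_path lift_path by metis

end

lemma contr_setup_del: "contr_setup H u w e \<Longrightarrow> e \<notin> F \<Longrightarrow> contr_setup (del H F) u w e"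
  unfolding contr_setup_def using wf_del by (auto simp: del_simps)




lemma wf_step: "wf_graph H \<Longrightarrow> minor_step H G \<Longrightarrow> wf_graph G"
proof -
  assume wf: "wf_graph H" and st: "minor_step H G"
  from st[unfolded minor_step_def] show ?thesis
  proof (elim disjE exE bexE conjE)
    fix v assume v: "v \<in> verts H" "\<forall>e\<in>edges H. v \<notin> inc H e" "verts H \<noteq> {v}"
      and G: "G = H\<lparr>verts := verts H - {v}\<rparr>"
    show ?thesis using wf v unfolding G wf_graph_def by auto
  next
    fix e assume "e \<in> edges H" "G = H\<lparr>edges := edges H - {e}\<rparr>"
    then show ?thesis using wf unfolding wf_graph_def by auto
  next
    fix e u w assume e: "e \<in> edges H" "inc H e = {u, w}" "u \<noteq> w"
      and np: "\<forall>f\<in>edges H. f \<noteq> e \<longrightarrow> inc H f \<noteq> inc H e"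
      and G: "G = \<lparr>verts = verts H - {w}, edges = edges H - {e},
             inc = (\<lambda>f. (\<lambda>x. if x = w then u else x) ` inc H f)\<rparr>"
    have G': "G = contr H u w e" unfolding G contr_def by simp
    interpret contr_setup H u w e using wf e by unfold_locales auto
    show ?thesis unfolding wf_graph_def
    proof (intro conjI ballI)
      show "finite (verts G)" "verts G \<noteq> {}" "finite (edges G)"
        using wf u_in uw unfolding G' wf_graph_def by (auto simp: contr_simps)
    next
      fix f assume f: "f \<in> edges G"
      then have fE: "f \<in> edges H" "f \<noteq> e" unfolding G' by (auto simp: contr_simps)
      obtain x y where xy: "inc H f = {x, y}" "x \<noteq> y" "x \<in> verts H" "y \<in> verts H"
        using wf_inc[OF wf fE(1)] by blast
      have ig: "inc G f = {sig u w x, sig u w y}" unfolding G' using xy by (simp add: contr_simps)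
      have "sig u w x \<noteq> sig u w y"
      proof
        assume "sig u w x = sig u w y"
        then have "{x, y} = {u, w}" using sig_eq xy uw by blast
        then have "inc H f = inc H e" using xy(1) ince by simp
        then show False using np fE by blast
      qed
      then show "inc G f \<subseteq> verts G" "card (inc G f) = 2" using ig sig_in[OF _ u_in uw] xy
        unfolding G' by (simp_all add: contr_simps)
    qed
  qed
qed

definition wit :: "mgraph \<Rightarrow> (nat \<times> nat \<times> nat) set \<Rightarrow> bool" where
  "wit G W \<longleftrightarrow> finite W \<and> W \<noteq> {} \<and>
     (\<forall>p\<in>W. conn G (fst p) (fst (snd p)) \<and> (\<forall>n. walkn G (fst p) (fst (snd p)) n \<longrightarrow> snd (snd p) \<le> n)) \<and>
     (\<forall>p\<in>W. \<forall>q\<in>W. p \<noteq> q \<longrightarrow> \<not> conn G (fst p) (fst q))"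

definition val :: "(nat \<times> nat \<times> nat) set \<Rightarrow> nat" where
  "val W = (\<Sum>p\<in>W. snd (snd p)) + card W"

definition mindist :: "mgraph \<Rightarrow> nat \<Rightarrow> nat \<Rightarrow> nat" where
  "mindist G a b = (LEAST n. walkn G a b n)"

lemma mindist: "conn G a b \<Longrightarrow> walkn G a b (mindist G a b)"
  unfolding conn_def mindist_def by (auto intro: LeastI)
lemma mindist_le: "walkn G a b n \<Longrightarrow> mindist G a b \<le> n"
  unfolding mindist_def by (rule Least_le)

lemma wit_eq: "wit G W \<Longrightarrow> p \<in> W \<Longrightarrow> q \<in> W \<Longrightarrow> conn G (fst p) (fst q) \<Longrightarrow> p = q"
  unfolding wit_def by blast

lemma wit_conn: "wit G W \<Longrightarrow> p \<in> W \<Longrightarrow> conn G (fst p) (fst (snd p))"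
  unfolding wit_def by blast

lemma wit_le: "wit G W \<Longrightarrow> p \<in> W \<Longrightarrow> walkn G (fst p) (fst (snd p)) n \<Longrightarrow> snd (snd p) \<le> n"
  unfolding wit_def by blast

lemma isolated_walk: "walkn H v b n \<Longrightarrow> \<forall>e\<in>edges H. v \<notin> inc H e \<Longrightarrow> b = v \<and> n = 0"
  by (induction rule: walkn.induct) auto

lemma walk_avoid: "walkn H a b n \<Longrightarrow> \<forall>e\<in>edges H. v \<notin> inc H e \<Longrightarrow> a \<noteq> v \<Longrightarrow>
   walkn (H\<lparr>verts := verts H - {v}\<rparr>) a b n"
proof (induction rule: walkn.induct)
  case (w0 a) then show ?case by (auto intro: walkn.w0)
next
  case (wS a g c b n)
  have "c \<noteq> v" using wS by auto
  then show ?case using wS by (auto intro: walkn.wS)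
qed

lemma step_vertex:
  assumes W: "wit H W" and v: "v \<in> verts H" "\<forall>e\<in>edges H. v \<notin> inc H e" "verts H \<noteq> {v}"
    and fin: "finite (verts H)"
  defines "G \<equiv> H\<lparr>verts := verts H - {v}\<rparr>"
  shows "\<exists>W'. wit G W' \<and> val W + card (verts G) \<le> val W' + card (verts H)"
proof -
  have "card (verts H) > 0" using v fin card_gt_0_iff by blast
  then have cardG: "card (verts G) + 1 = card (verts H)" unfolding G_def using v fin
    by (simp add: card_Diff_singleton)
  have GH: "walkn G a b n \<Longrightarrow> walkn H a b n" for a b n
    by (erule walkn_mono) (auto simp: G_def)
  have GHc: "conn G a b \<Longrightarrow> conn H a b" for a b unfolding conn_def using GH by blast
  define W' where "W' = {p\<in>W. fst p \<noteq> v}"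
  have good: "p \<in> W \<Longrightarrow> fst p \<noteq> v \<Longrightarrow> fst (snd p) \<noteq> v" for p
  proof
    assume p: "p \<in> W" "fst p \<noteq> v" "fst (snd p) = v"
    then have "conn H v (fst p)" using conn_sym[OF wit_conn[OF W p(1)]] by simp
    then show False using isolated_walk[OF _ v(2)] p(2) unfolding conn_def by blast
  qed
  have bad: "p \<in> W \<Longrightarrow> fst p = v \<Longrightarrow> snd (snd p) = 0" for p
  proof -
    assume p: "p \<in> W" "fst p = v"
    have "walkn H v v 0" using v by (auto intro: w0)
    then show ?thesis using wit_le[OF W p(1)] conn_def isolated_walk[OF _ v(2)] wit_conn[OF W p(1)] p(2)
      by (metis le_zero_eq)
  qed
  have witW': "wit G W'" if ne: "W' \<noteq> {}"
    unfolding wit_def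
  proof (intro conjI ballI impI)
    show "finite W'" using W unfolding wit_def W'_def by auto
    show "W' \<noteq> {}" by fact
  next
    fix p assume p: "p \<in> W'"
    then have p': "p \<in> W" "fst p \<noteq> v" "fst (snd p) \<noteq> v" using good unfolding W'_def by auto
    obtain n where "walkn H (fst p) (fst (snd p)) n" using wit_conn[OF W p'(1)] conn_def by blast
    then show "conn G (fst p) (fst (snd p))" using walk_avoid[OF _ v(2) p'(2)] unfolding G_def conn_def by blast
    show "\<forall>n. walkn G (fst p) (fst (snd p)) n \<longrightarrow> snd (snd p) \<le> n" using wit_le[OF W p'(1)] GH by blast
  next
    fix p q assume "p \<in> W'" "q \<in> W'" "p \<noteq> q"
    then show "\<not> conn G (fst p) (fst q)" using W GHc unfolding wit_def W'_def by blast
  qed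
  show ?thesis
  proof (cases "\<exists>p0\<in>W. fst p0 = v")
    case True
    then obtain p0 where p0: "p0 \<in> W" "fst p0 = v" by blast
    have W'eq: "W' = W - {p0}" unfolding W'_def using wit_eq[OF W p0(1)] p0 conn_refl[OF v(1)] by force
    have fW: "finite W" using W unfolding wit_def by auto
    have "card W > 0" using fW p0 card_gt_0_iff by blast
    then have "val W = val W' + 1" unfolding val_def W'eq using bad[OF p0] fW p0(1)
      by (simp add: sum.remove card_Diff_singleton)
    show ?thesis
    proof (cases "W' = {}")
      case False
      then show ?thesis using witW' \<open>val W = val W' + 1\<close> cardG by (intro exI[of _ W']) auto
    next
      case True
      obtain c where c: "c \<in> verts G" using v unfolding G_def by auto
      have "wit G {(c, c, 0)}" unfolding wit_def using c by (auto intro: conn_refl)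
      moreover have "val {(c, c, 0)} = 1" unfolding val_def by simp
      ultimately show ?thesis using True \<open>val W = val W' + 1\<close> cardG unfolding val_def
        by (intro exI[of _ "{(c, c, 0)}"]) auto
    qed
  next
    case False
    then have "W' = W" unfolding W'_def by auto
    then show ?thesis using witW' W cardG unfolding wit_def by (intro exI[of _ W']) auto
  qed
qed




lemma walk_split: "walkn H a b n \<Longrightarrow> conn (del H {e}) a b \<or>
   (\<exists>x y. inc H e = {x, y} \<and> conn (del H {e}) a x \<and> conn (del H {e}) y b)"
proof (induction rule: walkn.induct)
  case (w0 a) then show ?case by (auto intro: conn_refl simp: del_simps)
next
  case (wS a g c b n)
  have av: "a \<in> verts (del H {e})" "c \<in> verts (del H {e})" using wS walkn_verts by (auto simp: del_simps)
  show ?case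
  proof (cases "g = e")
    case False
    then have "conn (del H {e}) a c" using conn_edge[of g "del H {e}" a c] wS av by (simp add: del_simps)
    then show ?thesis using wS.IH conn_trans by blast
  next
    case True
    then have ie: "inc H e = {a, c}" using wS by simp
    from wS.IH show ?thesis
    proof
      assume "conn (del H {e}) c b"
      then show ?thesis using ie conn_refl[OF av(1)] by blast
    next
      assume "\<exists>x y. inc H e = {x, y} \<and> conn (del H {e}) c x \<and> conn (del H {e}) y b"
      then obtain x y where xy: "inc H e = {x, y}" "conn (del H {e}) c x" "conn (del H {e}) y b" by blast
      show ?thesis
      proof (cases "y = a")
        case True then show ?thesis using xy by blast
      next
        case False
        then have "y = c" using xy(1) ie by blast
        then show ?thesis using ie conn_refl[OF av(1)] xy(3) by blast
      qed
    qed
  qed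
qed

lemma step_edge:
  assumes W: "wit H W" and e: "e \<in> edges H" and wf: "wf_graph H"
  shows "\<exists>W'. wit (del H {e}) W' \<and> val W \<le> val W'"
proof -
  let ?G = "del H {e}"
  have GH: "walkn ?G a b n \<Longrightarrow> walkn H a b n" for a b n using walkn_del_mono by blast
  have GHc: "conn ?G a b \<Longrightarrow> conn H a b" for a b using conn_del_mono by blast
  have fW: "finite W" using W unfolding wit_def by auto
  show ?thesis
  proof (cases "\<exists>p0\<in>W. \<not> conn ?G (fst p0) (fst (snd p0))")
    case False
    have "wit ?G W" unfolding wit_def
    proof (intro conjI ballI impI)
      show "finite W" "W \<noteq> {}" using W unfolding wit_def by auto
    next
      fix p assume p: "p \<in> W"
      show "conn ?G (fst p) (fst (snd p))" using False p by blast
      show "\<forall>n. walkn ?G (fst p) (fst (snd p)) n \<longrightarrow> snd (snd p) \<le> n" using wit_le[OF W p] GH by blast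
    next
      fix p q assume "p \<in> W" "q \<in> W" "p \<noteq> q"
      then show "\<not> conn ?G (fst p) (fst q)" using W GHc unfolding wit_def by blast
    qed
    then show ?thesis by blast
  next
    case True
    then obtain a b l where p0: "(a, b, l) \<in> W" "\<not> conn ?G a b" by auto
    have cab: "conn H a b" using wit_conn[OF W p0(1)] by simp
    then obtain n where "walkn H a b n" unfolding conn_def by blast
    from walk_split[OF this, of e] p0(2) obtain x y where
      xy: "inc H e = {x, y}" "conn ?G a x" "conn ?G y b" by blast
    define l1 where "l1 = mindist ?G a x"
    define l2 where "l2 = mindist ?G y b"
    have xyv: "x \<in> verts H" "y \<in> verts H" using wf e xy(1) unfolding wf_graph_def by auto
    have "walkn H a b (l1 + (1 + l2))"
      using walkn_trans[OF GH[OF mindist[OF xy(2)]] walkn_trans[OF walkn_edge[OF e xy(1) xyv] GH[OF mindist[OF xy(3)]]]]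
      unfolding l1_def l2_def .
    then have ll: "l \<le> l1 + 1 + l2" using wit_le[OF W p0(1)] by simp
    define W' where "W' = (W - {(a, b, l)}) \<union> {(a, x, l1), (y, b, l2)}"
    have ay: "a \<noteq> y" using p0(2) xy(3) by blast
    have nay: "\<not> conn ?G a y" using p0(2) xy(3) conn_trans by blast
    have yb: "conn H y b" using GHc[OF xy(3)] .
    have other: "q \<in> W \<Longrightarrow> q \<noteq> (a, b, l) \<Longrightarrow> \<not> conn H (fst q) a \<and> \<not> conn H (fst q) y" for q
    proof -
      assume q: "q \<in> W" "q \<noteq> (a, b, l)"
      have 1: "\<not> conn H (fst q) a" using wit_eq[OF W q(1) p0(1)] q(2) by auto
      have "\<not> conn H (fst q) y"
      proof
        assume "conn H (fst q) y"
        then have "conn H (fst q) a" using conn_trans[OF conn_trans[OF _ yb] conn_sym[OF cab]] by blast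
        then show False using 1 by simp
      qed
      then show ?thesis using 1 by simp
    qed
    have xa: "conn H x a" "conn H y a" using conn_sym[OF GHc[OF xy(2)]] conn_trans[OF yb conn_sym[OF cab]] by auto
    have oconn: "q \<in> W \<Longrightarrow> q \<noteq> (a, b, l) \<Longrightarrow> conn ?G (fst q) (fst (snd q))" for q
    proof (rule ccontr)
      assume q: "q \<in> W" "q \<noteq> (a, b, l)" "\<not> conn ?G (fst q) (fst (snd q))"
      obtain m where "walkn H (fst q) (fst (snd q)) m" using wit_conn[OF W q(1)] conn_def by blast
      from walk_split[OF this, of e] q(3) obtain x' y' where
        "inc H e = {x', y'}" "conn ?G (fst q) x'" by blast
      then have "x' = x \<or> x' = y" "conn H (fst q) x'" using xy(1) GHc by auto
      then have "conn H (fst q) a" using xa conn_trans by blast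
      then show False using other[OF q(1,2)] by simp
    qed
    have n1: "(a, x, l1) \<notin> W - {(a, b, l)}"
    proof
      assume "(a, x, l1) \<in> W - {(a, b, l)}"
      then show False using other[of "(a, x, l1)"] conn_refl[of a H] conn_verts[OF cab] by auto
    qed
    have n2: "(y, b, l2) \<notin> W - {(a, b, l)}"
    proof
      assume "(y, b, l2) \<in> W - {(a, b, l)}"
      then show False using other[of "(y, b, l2)"] conn_refl[of y H] xyv by auto
    qed
    have wit': "wit ?G W'" unfolding wit_def
    proof (intro conjI ballI impI)
      show "finite W'" "W' \<noteq> {}" unfolding W'_def using fW by auto
    next
      fix p assume p: "p \<in> W'"
      show "conn ?G (fst p) (fst (snd p))"
      proof -
        consider "p \<in> W - {(a, b, l)}" | "p = (a, x, l1)" | "p = (y, b, l2)" using p unfolding W'_def by blast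
        then show ?thesis using xy oconn by cases auto
      qed
      show "\<forall>n. walkn ?G (fst p) (fst (snd p)) n \<longrightarrow> snd (snd p) \<le> n"
      proof -
        consider "p \<in> W - {(a, b, l)}" | "p = (a, x, l1)" | "p = (y, b, l2)" using p unfolding W'_def by blast
        then show ?thesis
        proof cases
          case 1 then show ?thesis using wit_le[OF W, of p] GH by blast
        qed (auto simp: l1_def l2_def intro: mindist_le)
      qed
    next
      fix p q assume pq: "p \<in> W'" "q \<in> W'" "p \<noteq> q"
      show "\<not> conn ?G (fst p) (fst q)"
      proof
        assume c: "conn ?G (fst p) (fst q)"
        then have cH: "conn H (fst p) (fst q)" using GHc by blast
        consider "p \<in> W - {(a, b, l)}" | "p = (a, x, l1)" | "p = (y, b, l2)" using pq(1) unfolding W'_def by blast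
        then show False
        proof cases
          case 1
          then show ?thesis
          proof -
            consider "q \<in> W - {(a, b, l)}" | "q = (a, x, l1)" | "q = (y, b, l2)" using pq(2) unfolding W'_def by blast
            then show False
            proof cases
              case 1 then show ?thesis using \<open>p \<in> W - {(a, b, l)}\<close> pq(3) cH W unfolding wit_def by blast
            next
              case 2 then show ?thesis using \<open>p \<in> W - {(a, b, l)}\<close> other cH by auto
            next
              case 3 then show ?thesis using \<open>p \<in> W - {(a, b, l)}\<close> other cH by auto
            qed
          qed
        next
          case 2
          consider "q \<in> W - {(a, b, l)}" | "q = (a, x, l1)" | "q = (y, b, l2)" using pq(2) unfolding W'_def by blast
          then show False
          proof cases
            case 1 then show ?thesis using 2 other conn_sym[OF cH] by auto
          next
            case (2) then show ?thesis using \<open>p = (a, x, l1)\<close> pq(3) by simp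
          next
            case 3 then show ?thesis using 2 nay c by auto
          qed
        next
          case 3
          consider "q \<in> W - {(a, b, l)}" | "q = (a, x, l1)" | "q = (y, b, l2)" using pq(2) unfolding W'_def by blast
          then show False
          proof cases
            case 1 then show ?thesis using 3 other conn_sym[OF cH] by auto
          next
            case 2 then show ?thesis using 3 nay conn_sym[OF c] by auto
          next
            case (3) then show ?thesis using \<open>p = (y, b, l2)\<close> pq(3) by simp
          qed
        qed
      qed
    qed
    have "val W' = (\<Sum>p\<in>W - {(a, b, l)}. snd (snd p)) + l1 + l2 + (card (W - {(a, b, l)}) + 2)"
      unfolding val_def W'_def using n1 n2 ay fW by (simp add: sum.union_disjoint card_insert_if)
    moreover have "card W > 0" using fW p0(1) card_gt_0_iff by blast
    then have "val W = (\<Sum>p\<in>W - {(a, b, l)}. snd (snd p)) + l + (card (W - {(a, b, l)}) + 1)"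
      unfolding val_def using fW p0(1) by (simp add: sum.remove card_Diff_singleton)
    ultimately have "val W \<le> val W'" using ll by linarith
    then show ?thesis using wit' by blast
  qed
qed




lemma path_conn_mem: "is_path G vs es \<Longrightarrow> x \<in> set vs \<Longrightarrow> conn G (hd vs) x"
proof -
  assume p: "is_path G vs es" and x: "x \<in> set vs"
  then obtain k where k: "k < length vs" "vs ! k = x" by (metis in_set_conv_nth)
  have "is_path G (take (Suc k) vs) (take k es)" using path_take[OF p k(1)] .
  have "hd (take (Suc k) vs) = hd vs" using k by (cases vs) auto
  moreover have "last (take (Suc k) vs) = vs ! k"
  proof -
    have "take (Suc k) vs \<noteq> []" "length (take (Suc k) vs) = Suc k" using k by auto
    then show ?thesis by (simp add: last_conv_nth)
  qed
  ultimately show ?thesis using path_conn[OF \<open>is_path G (take (Suc k) vs) (take k es)\<close>] k by simp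
qed

lemma sum_le_plus1:
  assumes "finite W" "\<forall>p\<in>W. f p \<le> g p + (1::nat)" "\<forall>p\<in>W. \<forall>q\<in>W. f p > g p \<longrightarrow> f q > g q \<longrightarrow> p = q"
  shows "sum f W \<le> sum g W + 1"
proof (cases "\<exists>p0\<in>W. f p0 > g p0")
  case False
  have "f x \<le> g x" if "x \<in> W" for x using False that by (simp add: not_less)
  then have "sum f W \<le> sum g W" by (rule sum_mono)
  then show ?thesis by simp
next
  case True
  then obtain p0 where p0: "p0 \<in> W" "f p0 > g p0" by blast
  have "f x \<le> g x" if x: "x \<in> W - {p0}" for x
  proof (rule ccontr)
    assume "\<not> f x \<le> g x" then have "f x > g x" by simp
    then have "x = p0" using assms(3) p0 x by blast
    then show False using x by simp
  qed
  then have "sum f (W - {p0}) \<le> sum g (W - {p0})" by (rule sum_mono)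
  moreover have "sum f W = f p0 + sum f (W - {p0})" "sum g W = g p0 + sum g (W - {p0})"
    using p0(1) assms(1) by (simp_all add: sum.remove)
  moreover have "f p0 \<le> g p0 + 1" using assms(2) p0(1) by blast
  ultimately show ?thesis by linarith
qed

context contr_setup begin

lemma sig_u: "sig u w u = u" using uw unfolding sig_def by simp

lemma step_contr_le:
  assumes a: "a \<in> verts H" and b: "b \<in> verts H" and c: "conn H a b"
    and le: "\<forall>n. walkn H a b n \<longrightarrow> l \<le> n"
  shows "l \<le> mindist (contr H u w e) (sig u w a) (sig u w b) + 1 \<and>
        (\<not> conn H a u \<longrightarrow> l \<le> mindist (contr H u w e) (sig u w a) (sig u w b))"
proof -
  let ?G = "contr H u w e"
  have "walkn ?G (sig u w a) (sig u w b) (mindist ?G (sig u w a) (sig u w b))"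
    using mindist project_conn[OF c] by blast
  from walkn_path[OF this] obtain vs es where p: "is_path ?G vs es" "hd vs = sig u w a" "last vs = sig u w b"
    "length es \<le> mindist ?G (sig u w a) (sig u w b)" by blast
  from lift_path[OF p(1) a b p(2)[symmetric] p(3)[symmetric]] obtain n where
    n: "n \<le> length es + (if u \<in> set vs then 1 else 0)" "walkn H a b n" by blast
  have "l \<le> n" using le n by blast
  moreover have "\<not> conn H a u \<Longrightarrow> u \<notin> set vs"
  proof
    assume nc: "\<not> conn H a u" and uv: "u \<in> set vs"
    have "conn ?G (sig u w a) u" using path_conn_mem[OF p(1) uv] p(2) by simp
    then have "conn H a u" using lift_conn[OF _ a u_in refl sig_u] by blast
    then show False using nc by simp
  qed
  ultimately show ?thesis
  proof (intro conjI impI)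
    assume "l \<le> n" "\<not> conn H a u \<Longrightarrow> u \<notin> set vs"
    show "l \<le> mindist ?G (sig u w a) (sig u w b) + 1" using \<open>l \<le> n\<close> n(1) p(4)
      by (cases "u \<in> set vs") auto
    assume "\<not> conn H a u"
    then show "l \<le> mindist ?G (sig u w a) (sig u w b)" using \<open>l \<le> n\<close> n(1) p(4) \<open>\<not> conn H a u \<Longrightarrow> u \<notin> set vs\<close>
      by auto
  qed
qed

lemma sig_conn: "a \<in> verts H \<Longrightarrow> b \<in> verts H \<Longrightarrow> sig u w a = sig u w b \<Longrightarrow> conn H a b"
proof -
  assume ab: "a \<in> verts H" "b \<in> verts H" "sig u w a = sig u w b"
  show ?thesis
  proof (cases "a = b")
    case True then show ?thesis using conn_refl ab by blast
  next
    case False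
    then have "{a, b} = {u, w}" using sig_eq ab uw by blast
    then show ?thesis using walk_uw unfolding conn_def by (auto simp: doubleton_eq_iff)
  qed
qed

lemma step_contr:
  assumes W: "wit H W"
  shows "\<exists>W'. wit (contr H u w e) W' \<and> val W \<le> val W' + 1"
proof -
  let ?G = "contr H u w e"
  define f where "f p = (sig u w (fst p), sig u w (fst (snd p)),
      mindist ?G (sig u w (fst p)) (sig u w (fst (snd p))))" for p :: "nat \<times> nat \<times> nat"
  have fW: "finite W" "W \<noteq> {}" using W unfolding wit_def by auto
  have vp: "p \<in> W \<Longrightarrow> fst p \<in> verts H \<and> fst (snd p) \<in> verts H" for p
    using wit_conn[OF W] conn_verts by blast
  have inj: "inj_on f W"
  proof (rule inj_onI)
    fix p q assume pq: "p \<in> W" "q \<in> W" "f p = f q"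
    then have "sig u w (fst p) = sig u w (fst q)" unfolding f_def by simp
    then have "conn H (fst p) (fst q)" using sig_conn vp pq by blast
    then show "p = q" using wit_eq[OF W pq(1,2)] by blast
  qed
  have wit': "wit ?G (f ` W)" unfolding wit_def
  proof (intro conjI ballI impI)
    show "finite (f ` W)" "f ` W \<noteq> {}" using fW by auto
  next
    fix p' assume "p' \<in> f ` W"
    then obtain p where p: "p \<in> W" "p' = f p" by blast
    show "conn ?G (fst p') (fst (snd p'))" using project_conn[OF wit_conn[OF W p(1)]] p unfolding f_def by simp
    show "\<forall>n. walkn ?G (fst p') (fst (snd p')) n \<longrightarrow> snd (snd p') \<le> n" using p mindist_le unfolding f_def by simp
  next
    fix p' q' assume "p' \<in> f ` W" "q' \<in> f ` W" "p' \<noteq> q'"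
    then obtain p q where pq: "p \<in> W" "q \<in> W" "p' = f p" "q' = f q" "p \<noteq> q" by blast
    show "\<not> conn ?G (fst p') (fst q')"
    proof
      assume "conn ?G (fst p') (fst q')"
      then have "conn ?G (sig u w (fst p)) (sig u w (fst q))" using pq unfolding f_def by simp
      then have "conn H (fst p) (fst q)" using lift_conn vp pq by blast
      then show False using wit_eq[OF W pq(1,2)] pq(5) by blast
    qed
  qed
  have "(\<Sum>p\<in>W. snd (snd p)) \<le> (\<Sum>p\<in>W. snd (snd (f p))) + 1"
  proof (rule sum_le_plus1[OF fW(1)]; intro ballI impI)
    fix p assume p: "p \<in> W"
    show "snd (snd p) \<le> snd (snd (f p)) + 1"
      using step_contr_le[of "fst p" "fst (snd p)" "snd (snd p)"] vp[OF p] wit_conn[OF W p] wit_le[OF W p]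
      unfolding f_def by simp
  next
    fix p q assume pq: "p \<in> W" "q \<in> W" "snd (snd (f p)) < snd (snd p)" "snd (snd (f q)) < snd (snd q)"
    have "conn H (fst p) u" "conn H (fst q) u"
      using step_contr_le[of "fst p" "fst (snd p)" "snd (snd p)"] vp[OF pq(1)] wit_conn[OF W pq(1)] wit_le[OF W pq(1)]
        step_contr_le[of "fst q" "fst (snd q)" "snd (snd q)"] vp[OF pq(2)] wit_conn[OF W pq(2)] wit_le[OF W pq(2)] pq(3,4)
      unfolding f_def by (simp_all add: not_le[symmetric])
    then have "conn H (fst p) (fst q)" using conn_trans conn_sym by blast
    then show "p = q" using wit_eq[OF W pq(1,2)] by blast
  qed
  moreover have "(\<Sum>p\<in>f ` W. snd (snd p)) = (\<Sum>p\<in>W. snd (snd (f p)))" using sum.reindex[OF inj] by simp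
  moreover have "card (f ` W) = card W" using card_image[OF inj] .
  ultimately have "val W \<le> val (f ` W) + 1" unfolding val_def by linarith
  then show ?thesis using wit' by blast
qed

end




lemma step_wit:
  assumes wf: "wf_graph H" and st: "minor_step H G" and W: "wit H W"
  shows "\<exists>W'. wit G W' \<and> val W + card (verts G) \<le> val W' + card (verts H)"
  using st[unfolded minor_step_def]
proof (elim disjE exE bexE conjE)
  fix v assume v: "v \<in> verts H" "\<forall>e\<in>edges H. v \<notin> inc H e" "verts H \<noteq> {v}"
    and G: "G = H\<lparr>verts := verts H - {v}\<rparr>"
  show ?thesis using step_vertex[OF W v] wf unfolding G wf_graph_def by blast
next
  fix e assume e: "e \<in> edges H" and G: "G = H\<lparr>edges := edges H - {e}\<rparr>"
  have "G = del H {e}" unfolding G del_def by simp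
  then show ?thesis using step_edge[OF W e wf] by (auto simp: del_simps)
next
  fix e u w assume e: "e \<in> edges H" "inc H e = {u, w}" "u \<noteq> w"
    and G: "G = \<lparr>verts = verts H - {w}, edges = edges H - {e},
             inc = (\<lambda>f. (\<lambda>x. if x = w then u else x) ` inc H f)\<rparr>"
  have G': "G = contr H u w e" unfolding G contr_def by simp
  interpret contr_setup H u w e using wf e by unfold_locales auto
  have "finite (verts H)" using wf unfolding wf_graph_def by simp
  then have "card (verts G) + 1 = card (verts H)" unfolding G' contr_simps using w_in
    by (metis card_Diff1_less card_Suc_Diff1 Suc_eq_plus1)
  then show ?thesis using step_contr[OF W] unfolding G' by fastforce
qed

lemma chain_wit:
  assumes "minor_step\<^sup>*\<^sup>* H G" "wf_graph H" "wit H W"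
  shows "wf_graph G \<and> (\<exists>W'. wit G W' \<and> val W + card (verts G) \<le> val W' + card (verts H))"
  using assms(1)
proof (induction rule: rtranclp_induct)
  case base then show ?case using assms by blast
next
  case (step G1 G2)
  then obtain W1 where W1: "wit G1 W1" "val W + card (verts G1) \<le> val W1 + card (verts G1) + (card (verts H) - card (verts G1))"
    "val W + card (verts G1) \<le> val W1 + card (verts H)" by auto
  obtain W2 where W2: "wit G2 W2" "val W1 + card (verts G2) \<le> val W2 + card (verts G1)"
    using step_wit[OF _ step(2) W1(1)] step(3) by blast
  have "wf_graph G2" using wf_step step by blast
  then show ?case using W1(3) W2 by (intro conjI exI[of _ W2]) auto
qed

definition uspset :: "mgraph \<Rightarrow> nat set" where
  "uspset G = {length vs | vs es. is_usp G vs es}"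

lemma usp_eq: "usp G = Max (uspset G)" unfolding usp_def uspset_def by simp

lemma path_len_le: "is_path G vs es \<Longrightarrow> finite (verts G) \<Longrightarrow> length vs \<le> card (verts G)"
  unfolding is_path_def by (metis card_mono distinct_card)

lemma uspset_finite: "finite (verts G) \<Longrightarrow> finite (uspset G)"
proof -
  assume f: "finite (verts G)"
  have "uspset G \<subseteq> {..card (verts G)}" unfolding uspset_def is_usp_def using path_len_le[OF _ f] by auto
  then show ?thesis using finite_subset by blast
qed

lemma single_usp: "v \<in> verts G \<Longrightarrow> is_usp G [v] []"
  unfolding is_usp_def
proof (intro conjI allI impI)
  assume v: "v \<in> verts G"
  show "is_path G [v] []" using v unfolding is_path_def by auto
  fix vs' es' assume a: "is_path G vs' es' \<and> hd vs' = hd [v] \<and> last vs' = last [v]"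
  then show "length [v] \<le> length vs'" unfolding is_path_def by (cases vs') auto
next
  fix vs' es' assume a: "is_path G vs' es' \<and> hd vs' = hd [v] \<and> last vs' = last [v] \<and> length vs' = length [v]"
  then show "vs' = [v]" unfolding is_path_def by (cases vs') auto
  from a show "es' = []" unfolding is_path_def by auto
qed

lemma usp_ge: "finite (verts G) \<Longrightarrow> is_usp G vs es \<Longrightarrow> length vs \<le> usp G"
  unfolding usp_eq using uspset_finite by (auto simp: uspset_def intro!: Max_ge)

lemma usp_attained: "wf_graph G \<Longrightarrow> \<exists>vs es. is_usp G vs es \<and> length vs = usp G"
proof -
  assume wf: "wf_graph G"
  then obtain v where "v \<in> verts G" unfolding wf_graph_def by auto
  then have "uspset G \<noteq> {}" using single_usp unfolding uspset_def by blast
  then have "usp G \<in> uspset G" unfolding usp_eq using uspset_finite wf unfolding wf_graph_def by (intro Max_in) auto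
  then show ?thesis unfolding uspset_def by auto
qed

lemma usp_le_card: "wf_graph G \<Longrightarrow> usp G \<le> card (verts G)"
  using usp_attained path_len_le unfolding is_usp_def wf_graph_def by metis

lemma start_wit: "wf_graph H \<Longrightarrow> \<exists>W. wit H W \<and> val W = usp H"
proof -
  assume wf: "wf_graph H"
  obtain vs es where u: "is_usp H vs es" "length vs = usp H" using usp_attained[OF wf] by blast
  have p: "is_path H vs es" using u unfolding is_usp_def by simp
  have "wit H {(hd vs, last vs, length es)}" unfolding wit_def
  proof (intro conjI ballI impI allI)
    fix p assume "p \<in> {(hd vs, last vs, length es)}"
    then have pp: "p = (hd vs, last vs, length es)" by simp
    show "conn H (fst p) (fst (snd p))" using path_conn[OF p] pp by simp
    fix n assume "walkn H (fst p) (fst (snd p)) n"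
    from walkn_path[OF this[unfolded pp, simplified]] obtain vs' es' where
      p': "is_path H vs' es'" "hd vs' = hd vs" "last vs' = last vs" "length es' \<le> n" by blast
    then have "length vs \<le> length vs'" using u unfolding is_usp_def by blast
    then show "snd (snd p) \<le> n" using p' p pp unfolding is_path_def by simp
  qed auto
  moreover have "val {(hd vs, last vs, length es)} = usp H" unfolding val_def using u p
    unfolding is_path_def by simp
  ultimately show ?thesis by blast
qed

lemma iso_walk:
  assumes f: "bij_betw f (verts G) (verts G')" and g: "bij_betw g (edges G) (edges G')"
    and i: "\<forall>e\<in>edges G. inc G' (g e) = f ` inc G e"
  shows "walkn G a b n \<Longrightarrow> walkn G' (f a) (f b) n"
proof (induction rule: walkn.induct)
  case (w0 a) then show ?case using f by (auto intro!: walkn.w0 dest: bij_betw_apply)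
next
  case (wS a ga c b n)
  have "inc G' (g ga) = {f a, f c}" using i wS by simp
  moreover have "g ga \<in> edges G'" "f a \<in> verts G'" using wS f g by (auto dest: bij_betw_apply)
  ultimately show ?case using wS by (auto intro: walkn.wS)
qed

lemma dist_path: "connected_graph G \<Longrightarrow> a \<in> verts G \<Longrightarrow> b \<in> verts G \<Longrightarrow>
   \<exists>vs es. is_path G vs es \<and> hd vs = a \<and> last vs = b \<and> length es = dist G a b"
proof -
  assume c: "connected_graph G" "a \<in> verts G" "b \<in> verts G"
  then obtain vs es where "is_path G vs es \<and> hd vs = a \<and> last vs = b" unfolding connected_graph_def by blast
  then have "\<exists>n vs es. is_path G vs es \<and> hd vs = a \<and> last vs = b \<and> length es = n" by blast
  from LeastI_ex[OF this] show ?thesis unfolding dist_def .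
qed

lemma dist_le_diam: "finite (verts G) \<Longrightarrow> a \<in> verts G \<Longrightarrow> b \<in> verts G \<Longrightarrow> dist G a b \<le> diameter G"
proof -
  assume f: "finite (verts G)" and ab: "a \<in> verts G" "b \<in> verts G"
  have "{dist G u v | u v. u \<in> verts G \<and> v \<in> verts G} = (\<lambda>(u, v). dist G u v) ` (verts G \<times> verts G)" by auto
  then have "finite {dist G u v | u v. u \<in> verts G \<and> v \<in> verts G}" using f by simp
  then show ?thesis unfolding diameter_def using ab by (intro Max_ge) auto
qed

lemma lower_bound:
  assumes wfG: "wf_graph G" and cG: "connected_graph G" and wfH: "wf_graph H" and m: "is_minor G H"
  shows "card (verts G) \<le> sp H + 1 + diameter G"
proof -
  obtain G' where G': "minor_step\<^sup>*\<^sup>* H G'" "graph_iso G G'" using m unfolding is_minor_def by blast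
  obtain f g where iso: "bij_betw f (verts G) (verts G')" "bij_betw g (edges G) (edges G')"
    "\<forall>e\<in>edges G. inc G' (g e) = f ` inc G e" using G'(2) unfolding graph_iso_def by blast
  obtain W where W: "wit H W" "val W = usp H" using start_wit[OF wfH] by blast
  obtain W' where W': "wit G' W'" "val W + card (verts G') \<le> val W' + card (verts H)"
    using chain_wit[OF G'(1) wfH W(1)] by blast
  have cardG: "card (verts G') = card (verts G)" using bij_betw_same_card[OF iso(1)] by simp
  have surj: "x \<in> verts G' \<Longrightarrow> \<exists>x0\<in>verts G. f x0 = x" for x using iso(1) unfolding bij_betw_def by (metis imageE)
  have conn': "x \<in> verts G' \<Longrightarrow> y \<in> verts G' \<Longrightarrow> conn G' x y" for x y
  proof -
    assume xy: "x \<in> verts G'" "y \<in> verts G'"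
    obtain x0 y0 where x0: "x0 \<in> verts G" "f x0 = x" "y0 \<in> verts G" "f y0 = y" using surj xy by metis
    obtain vs es where "is_path G vs es" "hd vs = x0" "last vs = y0" using cG x0 unfolding connected_graph_def by blast
    then have "walkn G x0 y0 (length es)" using path_walkn by metis
    then show ?thesis using iso_walk[OF iso] x0 unfolding conn_def by blast
  qed
  obtain p where p: "p \<in> W'" using W'(1) unfolding wit_def by blast
  have single: "W' = {p}"
  proof -
    have "q = p" if q: "q \<in> W'" for q
      using wit_eq[OF W'(1) q p] conn' conn_verts wit_conn[OF W'(1)] q p by blast
    then show ?thesis using p by blast
  qed
  obtain a b l where pabl: "p = (a, b, l)" by (cases p) auto
  have ab: "a \<in> verts G'" "b \<in> verts G'" using wit_conn[OF W'(1) p] conn_verts pabl by auto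
  obtain a0 b0 where a0: "a0 \<in> verts G" "f a0 = a" "b0 \<in> verts G" "f b0 = b" using surj ab by metis
  obtain vs es where d: "is_path G vs es" "hd vs = a0" "last vs = b0" "length es = dist G a0 b0"
    using dist_path[OF cG a0(1,3)] by blast
  have "walkn G' a b (dist G a0 b0)" using iso_walk[OF iso path_walkn[OF d(1)]] d a0 by simp
  then have "l \<le> dist G a0 b0" using wit_le[OF W'(1) p] pabl by simp
  also have "\<dots> \<le> diameter G" using dist_le_diam wfG a0 unfolding wf_graph_def by blast
  finally have "val W' \<le> diameter G + 1" unfolding single val_def pabl by simp
  then show ?thesis using W W' cardG usp_le_card[OF wfH] unfolding sp_def by linarith
qed




lemma path_nth_neq: "is_path G vs es \<Longrightarrow> i < length es \<Longrightarrow> vs ! i \<noteq> vs ! Suc i"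
  unfolding is_path_def by (simp add: nth_eq_iff_index_eq)

lemma acyclic_usp:
  assumes nc: "\<not> (\<exists>vs es. is_cycle G vs es)" and p: "is_path G vs es"
  shows "is_usp G vs es"
proof (rule bridge_usp[OF p], intro allI impI)
  fix i assume i: "i < length es"
  have "es ! i \<in> edges G" "inc G (es ! i) = {vs ! i, vs ! Suc i}" using p i unfolding is_path_def by auto
  then show "\<not> conn (del G {es ! i}) (vs ! i) (vs ! Suc i)"
    using acyclic_bridge[OF nc] path_nth_neq[OF p i] by blast
qed

lemma graph_iso_refl: "graph_iso G G"
  unfolding graph_iso_def by (rule exI[of _ id], rule exI[of _ id]) auto

lemma is_minor_refl: "is_minor G G"
  unfolding is_minor_def using graph_iso_refl by blast

lemma sfloor_le: "wf_graph K \<Longrightarrow> is_minor G K \<Longrightarrow> sfloor G \<le> sp K"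
  unfolding sfloor_def by (rule Least_le) blast

lemma sfloor_attained: "wf_graph G \<Longrightarrow> \<exists>H. wf_graph H \<and> is_minor G H \<and> sp H = sfloor G"
  unfolding sfloor_def by (rule LeastI_ex) (use is_minor_refl in blast)

lemma sfloor_lower: "wf_graph G \<Longrightarrow> connected_graph G \<Longrightarrow> card (verts G) \<le> sfloor G + 1 + diameter G"
  using sfloor_attained lower_bound by metis

lemma diam_path: "wf_graph G \<Longrightarrow> connected_graph G \<Longrightarrow> \<exists>vs es. is_path G vs es \<and> length es = diameter G"
proof -
  assume wf: "wf_graph G" and c: "connected_graph G"
  have "{dist G u v | u v. u \<in> verts G \<and> v \<in> verts G} = (\<lambda>(u, v). dist G u v) ` (verts G \<times> verts G)" by auto
  moreover have "verts G \<times> verts G \<noteq> {}" "finite (verts G \<times> verts G)" using wf unfolding wf_graph_def by auto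
  ultimately have "diameter G \<in> {dist G u v | u v. u \<in> verts G \<and> v \<in> verts G}" unfolding diameter_def
    by (metis (no_types, lifting) Max_in finite_imageI image_is_empty)
  then obtain a b where "a \<in> verts G" "b \<in> verts G" "diameter G = dist G a b" by blast
  then show ?thesis using dist_path[OF c] by metis
qed

lemma tree_usp_ge: "is_tree T \<Longrightarrow> diameter T + 1 \<le> usp T"
proof -
  assume t: "is_tree T"
  then obtain vs es where p: "is_path T vs es" "length es = diameter T" using diam_path unfolding is_tree_def by blast
  have "is_usp T vs es" using acyclic_usp p t unfolding is_tree_def by blast
  then show ?thesis using usp_ge p t unfolding is_tree_def wf_graph_def is_path_def by fastforce
qed

lemma tree_sfloor: "is_tree T \<Longrightarrow> sfloor T + 1 + diameter T = card (verts T)"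
proof -
  assume t: "is_tree T"
  have wf: "wf_graph T" and c: "connected_graph T" using t unfolding is_tree_def by auto
  have "card (verts T) \<le> sfloor T + 1 + diameter T" using sfloor_lower[OF wf c] .
  moreover have "sfloor T \<le> sp T" using sfloor_le[OF wf is_minor_refl] .
  moreover have "usp T \<le> card (verts T)" using usp_le_card[OF wf] .
  moreover have "diameter T + 1 \<le> usp T" using tree_usp_ge[OF t] .
  ultimately show ?thesis unfolding sp_def by linarith
qed

definition agree :: "mgraph \<Rightarrow> mgraph \<Rightarrow> bool" where
  "agree A B \<longleftrightarrow> verts A = verts B \<and> edges A = edges B \<and> (\<forall>f\<in>edges A. inc A f = inc B f)"

lemma agree_step: "agree A B \<Longrightarrow> minor_step A A' \<Longrightarrow> \<exists>B'. minor_step B B' \<and> agree A' B'"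
proof -
  assume ag: "agree A B" and st: "minor_step A A'"
  have vv: "verts A = verts B" and ee: "edges A = edges B" and ii: "\<forall>f\<in>edges A. inc A f = inc B f"
    using ag unfolding agree_def by auto
  from st[unfolded minor_step_def] show ?thesis
  proof (elim disjE exE bexE conjE)
    fix v assume v: "v \<in> verts A" "\<forall>e\<in>edges A. v \<notin> inc A e" "verts A \<noteq> {v}"
      and A': "A' = A\<lparr>verts := verts A - {v}\<rparr>"
    have "minor_step B (B\<lparr>verts := verts B - {v}\<rparr>)" unfolding minor_step_def using v vv ee ii by auto
    moreover have "agree A' (B\<lparr>verts := verts B - {v}\<rparr>)" using ag vv unfolding A' agree_def by auto
    ultimately show ?thesis by blast
  next
    fix e assume e: "e \<in> edges A" and A': "A' = A\<lparr>edges := edges A - {e}\<rparr>"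
    have "minor_step B (B\<lparr>edges := edges B - {e}\<rparr>)" unfolding minor_step_def using e ee by auto
    moreover have "agree A' (B\<lparr>edges := edges B - {e}\<rparr>)" using ag ee unfolding A' agree_def by auto
    ultimately show ?thesis by blast
  next
    fix e u w assume e: "e \<in> edges A" "inc A e = {u, w}" "u \<noteq> w"
      and np: "\<forall>f\<in>edges A. f \<noteq> e \<longrightarrow> inc A f \<noteq> inc A e"
      and A': "A' = \<lparr>verts = verts A - {w}, edges = edges A - {e},
             inc = (\<lambda>f. (\<lambda>x. if x = w then u else x) ` inc A f)\<rparr>"
    let ?B' = "\<lparr>verts = verts B - {w}, edges = edges B - {e},
             inc = (\<lambda>f. (\<lambda>x. if x = w then u else x) ` inc B f)\<rparr>"
    have "minor_step B ?B'" unfolding minor_step_def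
      apply (intro disjI2)
      apply (rule bexI[of _ e])
      using e np ee ii by auto
    moreover have "agree A' ?B'" using vv ee ii unfolding A' agree_def by auto
    ultimately show ?thesis by blast
  qed
qed

lemma agree_star: "minor_step\<^sup>*\<^sup>* A A' \<Longrightarrow> agree A B \<Longrightarrow> \<exists>B'. minor_step\<^sup>*\<^sup>* B B' \<and> agree A' B'"
proof (induction rule: rtranclp_induct)
  case base then show ?case by blast
next
  case (step A1 A2)
  then obtain B1 where "minor_step\<^sup>*\<^sup>* B B1" "agree A1 B1" by blast
  moreover obtain B2 where "minor_step B1 B2" "agree A2 B2" using agree_step[OF \<open>agree A1 B1\<close> step(2)] by blast
  ultimately show ?case by (meson rtranclp.rtrancl_into_rtrancl)
qed

lemma agree_iso: "graph_iso X A \<Longrightarrow> agree A B \<Longrightarrow> graph_iso X B"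
  unfolding graph_iso_def agree_def by (metis bij_betw_apply)

lemma agree_walk: "agree A B \<Longrightarrow> walkn A a b n \<Longrightarrow> walkn B a b n"
  unfolding agree_def by (intro walkn_mono[of A a b n B]) auto

lemma agree_conn: "agree A B \<Longrightarrow> conn A a b \<Longrightarrow> conn B a b"
  unfolding conn_def using agree_walk by blast

lemma agree_sym: "agree A B \<Longrightarrow> agree B A"
  unfolding agree_def by auto




context contr_setup begin

lemma project_path_e:
  assumes p: "is_path H vs es" and e: "e \<in> set es"
  shows "\<exists>m. m + 1 \<le> length es \<and> walkn (contr H u w e) (sig u w (hd vs)) (sig u w (last vs)) m"
proof -
  obtain i where i: "i < length es" "es ! i = e" using e by (metis in_set_conv_nth)
  have len: "length vs = length es + 1" using p unfolding is_path_def by simp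
  have inc_i: "inc H e = {vs ! i, vs ! Suc i}" using p i unfolding is_path_def by auto
  have p1: "is_path H (take (Suc i) vs) (take i es)" using path_take[OF p] i len by simp
  have "hd (take (Suc i) vs) = hd vs" using i len by (cases vs) auto
  moreover have "last (take (Suc i) vs) = vs ! i"
  proof -
    have "take (Suc i) vs \<noteq> []" "length (take (Suc i) vs) = Suc i" using i len by auto
    then show ?thesis by (simp add: last_conv_nth)
  qed
  ultimately have w1: "walkn H (hd vs) (vs ! i) i" using path_walkn[OF p1] i by (simp add: min_def)
  have p2: "is_path H (drop (Suc i) vs) (drop (Suc i) es)" using path_drop[OF p] i len by simp
  have "hd (drop (Suc i) vs) = vs ! Suc i" using i len by (simp add: hd_drop_conv_nth)
  moreover have "last (drop (Suc i) vs) = last vs" using i len by simp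
  ultimately have w2: "walkn H (vs ! Suc i) (last vs) (length es - Suc i)" using path_walkn[OF p2] by simp
  obtain m1 where m1: "m1 \<le> i" "walkn (contr H u w e) (sig u w (hd vs)) (sig u w (vs ! i)) m1"
    using project_walk[OF w1] by blast
  obtain m2 where m2: "m2 \<le> length es - Suc i" "walkn (contr H u w e) (sig u w (vs ! Suc i)) (sig u w (last vs)) m2"
    using project_walk[OF w2] by blast
  have "{vs ! i, vs ! Suc i} = {u, w}" using inc_i ince by simp
  then have "sig u w (vs ! i) = sig u w (vs ! Suc i)" unfolding sig_def using uw by (auto simp: doubleton_eq_iff)
  then have "walkn (contr H u w e) (sig u w (hd vs)) (sig u w (last vs)) (m1 + m2)"
    using walkn_trans[OF m1(2)] m2(2) by simp
  moreover have "m1 + m2 + 1 \<le> length es" using m1 m2 i by linarith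
  ultimately show ?thesis by blast
qed

end

lemma dist_le: "is_path G vs es \<Longrightarrow> dist G (hd vs) (last vs) \<le> length es"
  unfolding dist_def by (rule Least_le) blast

lemma walk_dist_le: "walkn G a b n \<Longrightarrow> dist G a b \<le> n"
proof -
  assume "walkn G a b n"
  from walkn_path[OF this] obtain vs es where "is_path G vs es" "hd vs = a" "last vs = b" "length es \<le> n" by blast
  then show ?thesis using dist_le by fastforce
qed

lemma tree_no_parallel: "is_tree T \<Longrightarrow> e \<in> edges T \<Longrightarrow> f \<in> edges T \<Longrightarrow> f \<noteq> e \<Longrightarrow> inc T e = {u, w} \<Longrightarrow> u \<noteq> w
   \<Longrightarrow> inc T f \<noteq> inc T e"
proof
  assume t: "is_tree T" and ef: "e \<in> edges T" "f \<in> edges T" "f \<noteq> e" "inc T e = {u, w}" "u \<noteq> w"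
    and eq: "inc T f = inc T e"
  have "is_cycle T [u, w] [e, f]" unfolding is_cycle_def
  proof (intro conjI allI impI)
    show "set [u, w] \<subseteq> verts T" using t ef unfolding is_tree_def wf_graph_def by auto
    fix i assume "i < length [e, f]"
    then have "i = 0 \<or> i = 1" by auto
    then show "[e, f] ! i \<in> edges T" "inc T ([e, f] ! i) = {[u, w] ! i, [u, w] ! (Suc i mod length [u, w])}"
      using ef eq by (auto simp: insert_commute)
  qed (use ef in auto)
  then show False using t unfolding is_tree_def by blast
qed

lemma diam_pos: "wf_graph G \<Longrightarrow> connected_graph G \<Longrightarrow> u \<in> verts G \<Longrightarrow> w \<in> verts G \<Longrightarrow> u \<noteq> w \<Longrightarrow> 1 \<le> diameter G"
proof -
  assume a: "wf_graph G" "connected_graph G" "u \<in> verts G" "w \<in> verts G" "u \<noteq> w"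
  obtain vs es where p: "is_path G vs es" "hd vs = u" "last vs = w" "length es = dist G u w"
    using dist_path a by blast
  have "length es \<noteq> 0"
  proof
    assume "length es = 0"
    then have "length vs = 1" using p unfolding is_path_def by simp
    then have "hd vs = last vs" by (cases vs) auto
    then show False using p a by simp
  qed
  moreover have "dist G u w \<le> diameter G" using dist_le_diam a unfolding wf_graph_def by blast
  ultimately show ?thesis using p by linarith
qed

lemma common_edge_not_minimal:
  assumes t: "is_tree T" and e: "e \<in> edges T" and all: "\<forall>vs es. diametric_path T vs es \<longrightarrow> e \<in> set es"
  shows "\<not> sfloor_minor_minimal T"
proof -
  have wf: "wf_graph T" and cT: "connected_graph T" and nc: "\<not> (\<exists>vs es. is_cycle T vs es)"
    using t unfolding is_tree_def by auto
  obtain u w where uw: "inc T e = {u, w}" "u \<noteq> w" "u \<in> verts T" "w \<in> verts T" using wf_inc[OF wf e] by blast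
  interpret contr_setup T u w e using wf e uw by unfold_locales auto
  let ?K = "contr T u w e"
  have np: "\<forall>f\<in>edges T. f \<noteq> e \<longrightarrow> inc T f \<noteq> inc T e" using tree_no_parallel[OF t e _ _ ince uw] by blast
  have st: "minor_step T ?K" unfolding minor_step_def contr_def
    apply (rule disjI2, rule disjI2)
    apply (rule bexI[of _ e])
     apply (rule exI[of _ u], rule exI[of _ w])
     apply (intro conjI)
    using ince uw np e by simp_all
  have wfK: "wf_graph ?K" using wf_step[OF wf st] .
  have vK: "verts ?K = verts T - {w}" by (simp add: contr_simps)
  have finT: "finite (verts T)" using wf unfolding wf_graph_def by simp
  have "card (verts T) > 0" using finT w_in card_gt_0_iff by blast
  then have cardK: "card (verts ?K) + 1 = card (verts T)" using vK w_in finT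
    by (simp add: card_Diff_singleton)
  have connK: "conn ?K x y" if xy: "x \<in> verts ?K" "y \<in> verts ?K" for x y
  proof -
    have xy': "x \<in> verts T" "y \<in> verts T" "x \<noteq> w" "y \<noteq> w" using xy vK by auto
    obtain vs es where "is_path T vs es" "hd vs = x" "last vs = y" using cT xy' unfolding connected_graph_def by blast
    then have "conn T x y" using path_conn by blast
    from project_conn[OF this] show ?thesis using xy' sig_simps by simp
  qed
  have cK: "connected_graph ?K" unfolding connected_graph_def
  proof (intro ballI)
    fix x y assume "x \<in> verts ?K" "y \<in> verts ?K"
    then obtain n where "walkn ?K x y n" using connK unfolding conn_def by blast
    from walkn_path[OF this] show "\<exists>vs es. is_path ?K vs es \<and> hd vs = x \<and> last vs = y" by blast
  qed
  have dK: "dist ?K x y + 1 \<le> diameter T" if xy: "x \<in> verts ?K" "y \<in> verts ?K" for x y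
  proof -
    have xy': "x \<in> verts T" "y \<in> verts T" "x \<noteq> w" "y \<noteq> w" using xy vK by auto
    obtain vs es where p: "is_path T vs es" "hd vs = x" "last vs = y" "length es = dist T x y"
      using dist_path[OF cT xy'(1,2)] by blast
    have le: "dist T x y \<le> diameter T" using dist_le_diam wf xy' unfolding wf_graph_def by blast
    show ?thesis
    proof (cases "e \<in> set es")
      case True
      obtain m where m: "m + 1 \<le> length es" "walkn ?K (sig u w (hd vs)) (sig u w (last vs)) m"
        using project_path_e[OF p(1) True] by blast
      have "sig u w (hd vs) = x" "sig u w (last vs) = y" using p(2,3) sig_simps(2) xy'(3,4) by auto
      then have "dist ?K x y \<le> m" using walk_dist_le m(2) by metis
      then show ?thesis using m(1) p(4) le by linarith
    next
      case False
      then have "length es \<noteq> diameter T" using all p(1) unfolding diametric_path_def by blast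
      obtain m where m: "m \<le> length es" "walkn ?K (sig u w x) (sig u w y) m"
        using project_walk[OF path_walkn[OF p(1)]] p by auto
      have "sig u w x = x" "sig u w y = y" using sig_simps(2) xy'(3,4) by auto
      then have "dist ?K x y \<le> m" using walk_dist_le m(2) by metis
      then show ?thesis using m(1) p(4) le \<open>length es \<noteq> diameter T\<close> by linarith
    qed
  qed
  have "diameter ?K + 1 \<le> diameter T"
  proof -
    have fin: "finite {dist ?K x y | x y. x \<in> verts ?K \<and> y \<in> verts ?K}"
    proof -
      have "{dist ?K x y | x y. x \<in> verts ?K \<and> y \<in> verts ?K} = (\<lambda>(x, y). dist ?K x y) ` (verts ?K \<times> verts ?K)" by auto
      then show ?thesis using wfK unfolding wf_graph_def by simp
    qed
    obtain x0 where x0: "x0 \<in> verts ?K" using wfK unfolding wf_graph_def by auto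
    have "dist ?K x0 x0 \<in> {dist ?K x y | x y. x \<in> verts ?K \<and> y \<in> verts ?K}" using x0 by blast
    then have ne: "{dist ?K x y | x y. x \<in> verts ?K \<and> y \<in> verts ?K} \<noteq> {}" by blast
    have "diameter ?K \<in> {dist ?K x y | x y. x \<in> verts ?K \<and> y \<in> verts ?K}"
      unfolding diameter_def using Max_in[OF fin ne] .
    then obtain x y where "x \<in> verts ?K" "y \<in> verts ?K" "diameter ?K = dist ?K x y" by blast
    then show ?thesis using dK by simp
  qed
  have lowK: "card (verts ?K) \<le> sfloor ?K + 1 + diameter ?K" using sfloor_lower[OF wfK cK] .
  have "is_minor ?K T" unfolding is_minor_def using st graph_iso_refl by (intro exI[of _ ?K]) auto
  then have upK: "sfloor ?K \<le> sp T" using sfloor_le[OF wf] by blast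
  have sT: "sfloor T + 1 + diameter T = card (verts T)" using tree_sfloor[OF t] .
  have "usp T \<le> card (verts T)" "diameter T + 1 \<le> usp T" using usp_le_card[OF wf] tree_usp_ge[OF t] by auto
  then have "sfloor ?K = sfloor T" using lowK upK sT cardK \<open>diameter ?K + 1 \<le> diameter T\<close> unfolding sp_def by linarith
  moreover have "is_proper_minor ?K T" unfolding is_proper_minor_def using st graph_iso_refl by (intro exI[of _ ?K]) auto
  ultimately show ?thesis unfolding sfloor_minor_minimal_def using wfK by blast
qed




lemma tree_no_isolated: "is_tree T \<Longrightarrow> v \<in> verts T \<Longrightarrow> \<forall>e\<in>edges T. v \<notin> inc T e \<Longrightarrow> verts T = {v}"
proof -
  assume t: "is_tree T" and v: "v \<in> verts T" "\<forall>e\<in>edges T. v \<notin> inc T e"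
  have "c = v" if c: "c \<in> verts T" for c
  proof -
    obtain vs es where "is_path T vs es" "hd vs = v" "last vs = c" using t v c unfolding is_tree_def connected_graph_def by blast
    then have "walkn T v c (length es)" using path_walkn by metis
    then show ?thesis using isolated_walk v by blast
  qed
  then show ?thesis using v by blast
qed

lemma contr_case:
  assumes t: "is_tree T" and e: "e \<in> edges T" "inc T e = {u, w}" "u \<noteq> w"
    and P: "is_path T vs es" "length es = diameter T" "e \<notin> set es"
  shows "sp (contr T u w e) + diameter T + 2 \<le> card (verts T)"
proof -
  have wf: "wf_graph T" and nc: "\<not> (\<exists>vs es. is_cycle T vs es)" using t unfolding is_tree_def by auto
  interpret contr_setup T u w e using wf e by unfold_locales auto
  let ?K = "contr T u w e"
  have Pd: "is_path (del T {e}) vs es" using path_del[OF P(1)] P(3) by auto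
  have notboth: "\<not> (u \<in> set vs \<and> w \<in> set vs)"
  proof
    assume "u \<in> set vs \<and> w \<in> set vs"
    then have "conn (del T {e}) u w" using path_conn_mem[OF Pd] conn_trans conn_sym by blast
    then show False using acyclic_bridge[OF nc e ince uw] by blast
  qed
  have inj: "inj_on (sig u w) (set vs)"
  proof (rule inj_onI)
    fix x y assume xy: "x \<in> set vs" "y \<in> set vs" "sig u w x = sig u w y"
    show "x = y"
    proof (rule ccontr)
      assume "x \<noteq> y"
      then have "{x, y} = {u, w}" using sig_eq xy(3) uw by blast
      then show False using notboth xy by (auto simp: doubleton_eq_iff)
    qed
  qed
  let ?vs = "map (sig u w) vs"
  have len: "length vs = length es + 1" "distinct vs" "vs \<noteq> []" "set vs \<subseteq> verts T" using P(1) unfolding is_path_def by auto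
  have pK: "is_path ?K ?vs es" unfolding is_path_def
  proof (intro conjI allI impI)
    show "?vs \<noteq> []" using len by simp
    show "distinct ?vs" using len inj by (simp add: distinct_map)
    show "set ?vs \<subseteq> verts ?K" using len sig_in[OF _ u_in uw] by (auto simp: contr_simps)
    show "length ?vs = length es + 1" using len by simp
  next
    fix i assume i: "i < length es"
    have "es ! i \<in> edges T" "inc T (es ! i) = {vs ! i, vs ! Suc i}" "es ! i \<noteq> e"
      using P i unfolding is_path_def by (auto simp: in_set_conv_nth)
    then show "es ! i \<in> edges ?K" "inc ?K (es ! i) = {?vs ! i, ?vs ! Suc i}"
      using i len by (simp_all add: contr_simps)
  qed
  have uspK: "is_usp ?K ?vs es"
  proof (rule bridge_usp[OF pK], intro allI impI)
    fix i assume i: "i < length es"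
    let ?f = "es ! i"
    have f: "?f \<in> edges T" "inc T ?f = {vs ! i, vs ! Suc i}" "?f \<noteq> e"
      using P i unfolding is_path_def by (auto simp: in_set_conv_nth)
    have vi: "vs ! i \<in> verts T" "vs ! Suc i \<in> verts T" using len i by auto
    interpret S: contr_setup "del T {?f}" u w e using contr_setup_del[OF contr_setup_axioms] f(3) by auto
    show "\<not> conn (del ?K {?f}) (?vs ! i) (?vs ! Suc i)"
    proof
      assume "conn (del ?K {?f}) (?vs ! i) (?vs ! Suc i)"
      then have "conn (contr (del T {?f}) u w e) (sig u w (vs ! i)) (sig u w (vs ! Suc i))"
        using i len by (simp add: del_contr)
      then have "conn (del T {?f}) (vs ! i) (vs ! Suc i)" using S.lift_conn vi by (simp add: del_simps)
      then show False using acyclic_bridge[OF nc f(1,2)] path_nth_neq[OF P(1) i] by blast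
    qed
  qed
  have wfK: "wf_graph ?K"
  proof -
    have np: "\<forall>f\<in>edges T. f \<noteq> e \<longrightarrow> inc T f \<noteq> inc T e" using tree_no_parallel[OF t e(1) _ _ ince uw] by blast
    have st: "minor_step T ?K" unfolding minor_step_def contr_def
      apply (rule disjI2, rule disjI2)
      apply (rule bexI[of _ e])
       apply (rule exI[of _ u], rule exI[of _ w])
       apply (intro conjI)
      using ince uw np e by simp_all
    then show ?thesis using wf_step[OF wf] by blast
  qed
  have finT: "finite (verts T)" using wf unfolding wf_graph_def by simp
  have "card (verts T) > 0" using finT w_in card_gt_0_iff by blast
  then have cardK: "card (verts ?K) + 1 = card (verts T)" using w_in finT
    by (simp add: card_Diff_singleton contr_simps)
  have "length ?vs \<le> usp ?K" using usp_ge[OF _ uspK] wfK unfolding wf_graph_def by blast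
  moreover have "usp ?K \<le> card (verts ?K)" using usp_le_card[OF wfK] .
  ultimately show ?thesis using cardK len P(2) unfolding sp_def by simp
qed




lemma comp_lemma:
  assumes f: "f \<noteq> e" and xs: "conn (del T {e}) x s" and sb: "\<not> conn (del T {e}) s b"
    and w: "walkn (del (T\<lparr>inc := (inc T)(e := {b, x})\<rparr>) {f}) a z n"
  shows "(conn (del T {e}) s a = conn (del T {e}) s z \<and> conn (del T {e, f}) a z) \<or>
         (conn (del T {e}) s a \<noteq> conn (del T {e}) s z \<and>
          conn (del T {e, f}) a (if conn (del T {e}) s a then x else b) \<and>
          conn (del T {e, f}) (if conn (del T {e}) s z then x else b) z)"
  using w
proof (induction rule: walkn.induct)
  case (w0 a)
  then show ?case by (auto intro: conn_refl simp: del_simps)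
next
  case (wS a g c z n)
  let ?K = "T\<lparr>inc := (inc T)(e := {b, x})\<rparr>"
  let ?D = "del T {e}"
  let ?S = "del T {e, f}"
  have "c \<in> verts (del ?K {f})" using walkn_verts[OF wS(4)] by blast
  then have av: "a \<in> verts T" "c \<in> verts T" using wS(1) by (simp_all add: del_simps)
  have gf: "g \<in> edges T" "g \<noteq> f" using wS by (auto simp: del_simps)
  have sx: "conn ?D s x" using conn_sym[OF xs] .
  have xv: "x \<in> verts T" using conn_verts[OF xs] by (simp add: del_simps)
  have nsb: "\<not> conn ?D s b" using sb .
  have bv: "b \<in> verts T" if "conn ?S b z" using conn_verts[OF that] by (simp add: del_simps)
  show ?case
  proof (cases "g = e")
    case True
    then have abx: "{a, c} = {b, x}" using wS by (simp add: del_simps)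
    have xb: "x \<noteq> b" using sx nsb by blast
    have "(a = x \<and> c = b) \<or> (a = b \<and> c = x)" using abx xb by (auto simp: doubleton_eq_iff)
    then show ?thesis
    proof
      assume ac: "a = x \<and> c = b"
      have sa: "conn ?D s a" "\<not> conn ?D s c" using ac sx nsb by auto
      from wS.IH show ?thesis
      proof
        assume h: "conn ?D s c = conn ?D s z \<and> conn ?S c z"
        then show ?thesis using sa ac conn_refl[of x ?S] xv by (simp add: del_simps)
      next
        assume h: "conn ?D s c \<noteq> conn ?D s z \<and> conn ?S c (if conn ?D s c then x else b) \<and>
          conn ?S (if conn ?D s z then x else b) z"
        then have "conn ?D s z" using sa by simp
        then show ?thesis using h sa ac by simp
      qed
    next
      assume ac: "a = b \<and> c = x"
      have sa: "\<not> conn ?D s a" "conn ?D s c" using ac sx nsb by auto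
      have bv': "b \<in> verts T" using av ac by simp
      from wS.IH show ?thesis
      proof
        assume h: "conn ?D s c = conn ?D s z \<and> conn ?S c z"
        then show ?thesis using sa ac conn_refl[of b ?S] bv' by (simp add: del_simps)
      next
        assume h: "conn ?D s c \<noteq> conn ?D s z \<and> conn ?S c (if conn ?D s c then x else b) \<and>
          conn ?S (if conn ?D s z then x else b) z"
        then have "\<not> conn ?D s z" using sa by simp
        then show ?thesis using h sa ac by simp
      qed
    qed
  next
    case False
    have ig: "inc T g = {a, c}" using wS False by (simp add: del_simps)
    have "conn ?S a c" using conn_edge[of g ?S a c] gf False ig av by (simp add: del_simps)
    moreover have "conn ?D a c" using conn_edge[of g ?D a c] gf False ig av by (simp add: del_simps)
    then have "conn ?D s a = conn ?D s c" using conn_trans conn_sym by blast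
    ultimately show ?thesis using wS.IH conn_trans by (smt (verit))
  qed
qed




lemma edge_case:
  assumes t: "is_tree T" and e: "e \<in> edges T"
    and P: "is_path T vs es" "length es = diameter T" "e \<notin> set es"
  shows "\<exists>K. wf_graph K \<and> minor_step K (K\<lparr>edges := edges K - {e}\<rparr>) \<and>
     agree (T\<lparr>edges := edges T - {e}\<rparr>) (K\<lparr>edges := edges K - {e}\<rparr>) \<and>
     sp K + diameter T + 2 \<le> card (verts T)"
proof -
  have wf: "wf_graph T" and nc: "\<not> (\<exists>vs es. is_cycle T vs es)" and cT: "connected_graph T"
    using t unfolding is_tree_def by auto
  obtain p q where pq: "inc T e = {p, q}" "p \<noteq> q" "p \<in> verts T" "q \<in> verts T" using wf_inc[OF wf e] by blast
  let ?D = "del T {e}"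
  define x where "x = last vs"
  have len: "length vs = length es + 1" "distinct vs" "vs \<noteq> []" "set vs \<subseteq> verts T" using P(1) unfolding is_path_def by auto
  have xv: "x \<in> verts T" using len unfolding x_def by auto
  obtain vs1 es1 where "is_path T vs1 es1" "hd vs1 = x" "last vs1 = p" using cT xv pq unfolding connected_graph_def by blast
  then have "walkn T x p (length es1)" using path_walkn by metis
  from walk_split[OF this, of e] have "conn ?D x p \<or> conn ?D x q" using pq(1) by (auto simp: doubleton_eq_iff)
  then obtain s b where sb: "{s, b} = {p, q}" "s \<noteq> b" "conn ?D x s"
    using pq(2) by (metis insert_commute)
  have incsb: "inc T e = {s, b}" using sb pq by simp
  have nsb: "\<not> conn ?D s b" using acyclic_bridge[OF nc e incsb sb(2)] .
  have bv: "b \<in> verts T" using sb pq by (auto simp: doubleton_eq_iff)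
  have Pd: "is_path ?D vs es" using path_del[OF P(1)] P(3) by auto
  have vx: "v \<in> set vs \<Longrightarrow> conn ?D v x" for v
    using path_conn_mem[OF Pd] path_conn[OF Pd] conn_sym conn_trans unfolding x_def by blast
  have bnv: "b \<notin> set vs"
  proof
    assume "b \<in> set vs"
    then have "conn ?D b s" using vx sb(3) conn_trans by blast
    then show False using nsb conn_sym by blast
  qed
  have xb: "x \<noteq> b" using sb(3) nsb conn_sym by blast
  define K where "K = T\<lparr>inc := (inc T)(e := {b, x})\<rparr>"
  have Ks: "verts K = verts T" "edges K = edges T" "inc K e = {b, x}" "g \<noteq> e \<Longrightarrow> inc K g = inc T g" for g
    unfolding K_def by auto
  have wfK: "wf_graph K" unfolding wf_graph_def
  proof (intro conjI ballI)
    show "finite (verts K)" "verts K \<noteq> {}" "finite (edges K)" using wf Ks unfolding wf_graph_def by auto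
  next
    fix g assume g: "g \<in> edges K"
    show "inc K g \<subseteq> verts K"
      using wf g Ks xv bv unfolding wf_graph_def by (cases "g = e") auto
    show "card (inc K g) = 2"
      using wf g Ks xb unfolding wf_graph_def by (cases "g = e") auto
  qed
  have st: "minor_step K (K\<lparr>edges := edges K - {e}\<rparr>)" unfolding minor_step_def using e Ks by auto
  have ag: "agree (T\<lparr>edges := edges T - {e}\<rparr>) (K\<lparr>edges := edges K - {e}\<rparr>)"
    unfolding agree_def using Ks by auto
  have agD: "agree (del K {e}) ?D" using ag unfolding del_def agree_def by auto
  let ?vs = "vs @ [b]" and ?es = "es @ [e]"
  have lastx: "vs ! length es = x" using len unfolding x_def by (simp add: last_conv_nth)
  have pK: "is_path K ?vs ?es" unfolding is_path_def
  proof (intro conjI allI impI)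
    show "?vs \<noteq> []" by simp
    show "distinct ?vs" using len bnv by simp
    show "set ?vs \<subseteq> verts K" using len bv Ks by auto
    show "length ?vs = length ?es + 1" using len by simp
  next
    fix i assume i: "i < length ?es"
    show "?es ! i \<in> edges K" using i P(1) e Ks unfolding is_path_def by (auto simp: nth_append)
    show "inc K (?es ! i) = {?vs ! i, ?vs ! Suc i}"
    proof (cases "i < length es")
      case True
      have "es ! i \<noteq> e" using P(3) True by (auto simp: in_set_conv_nth)
      then show ?thesis using True P(1) Ks(4) len unfolding is_path_def by (auto simp: nth_append)
    next
      case False
      then have "i = length es" using i by simp
      then show ?thesis using Ks(3) lastx len by (auto simp: nth_append insert_commute)
    qed
  qed
  have uspK: "is_usp K ?vs ?es"
  proof (rule bridge_usp[OF pK], intro allI impI)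
    fix i assume i: "i < length ?es"
    show "\<not> conn (del K {?es ! i}) (?vs ! i) (?vs ! Suc i)"
    proof (cases "i < length es")
      case False
      then have ie: "i = length es" using i by simp
      show ?thesis
      proof
        assume "conn (del K {?es ! i}) (?vs ! i) (?vs ! Suc i)"
        then have "conn (del K {e}) x b" using ie lastx len by (simp add: nth_append)
        then have "conn ?D x b" using agree_conn[OF agD] by blast
        then show False using nsb sb(3) conn_trans conn_sym by blast
      qed
    next
      case True
      let ?f = "es ! i"
      have f: "?f \<in> edges T" "inc T ?f = {vs ! i, vs ! Suc i}" "?f \<noteq> e"
        using P True unfolding is_path_def by (auto simp: in_set_conv_nth)
      have vi: "?vs ! i = vs ! i" "?vs ! Suc i = vs ! Suc i" "?es ! i = ?f" using True len by (auto simp: nth_append)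
      have vv: "vs ! i \<in> verts T" "vs ! Suc i \<in> verts T" using True len by auto
      show ?thesis
      proof
        assume "conn (del K {?es ! i}) (?vs ! i) (?vs ! Suc i)"
        then obtain n where "walkn (del K {?f}) (vs ! i) (vs ! Suc i) n" using vi unfolding conn_def by auto
        from comp_lemma[OF f(3) sb(3) nsb this[unfolded K_def]]
        have c: "(conn ?D s (vs ! i) = conn ?D s (vs ! Suc i) \<and> conn (del T {e, ?f}) (vs ! i) (vs ! Suc i)) \<or>
         (conn ?D s (vs ! i) \<noteq> conn ?D s (vs ! Suc i) \<and> True)" by blast
        have "conn ?D (vs ! i) (vs ! Suc i)" using conn_edge[of ?f ?D] f vv by (simp add: del_simps)
        then have "conn ?D s (vs ! i) = conn ?D s (vs ! Suc i)" using conn_trans conn_sym by blast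
        then have "conn (del T {e, ?f}) (vs ! i) (vs ! Suc i)" using c by blast
        then have "conn (del T {?f}) (vs ! i) (vs ! Suc i)" using conn_del_anti by blast
        then show False using acyclic_bridge[OF nc f(1,2)] path_nth_neq[OF P(1) True] by blast
      qed
    qed
  qed
  have "length ?vs \<le> usp K" using usp_ge[OF _ uspK] wfK unfolding wf_graph_def by blast
  moreover have "usp K \<le> card (verts K)" using usp_le_card[OF wfK] .
  ultimately have "sp K + diameter T + 2 \<le> card (verts T)" using len P(2) Ks unfolding sp_def by simp
  then show ?thesis using wfK st ag by blast
qed

lemma no_common_minimal:
  assumes t: "is_tree T" and all: "\<forall>e\<in>edges T. \<exists>vs es. diametric_path T vs es \<and> e \<notin> set es"
  shows "sfloor_minor_minimal T"
  unfolding sfloor_minor_minimal_def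
proof (intro allI impI)
  fix H assume H: "wf_graph H \<and> is_proper_minor H T"
  have wf: "wf_graph T" using t unfolding is_tree_def by auto
  obtain G' where G': "minor_step\<^sup>+\<^sup>+ T G'" "graph_iso H G'" using H unfolding is_proper_minor_def by blast
  obtain G1 where G1: "minor_step T G1" "minor_step\<^sup>*\<^sup>* G1 G'" using tranclpD[OF G'(1)] by blast
  have sT: "sfloor T + 1 + diameter T = card (verts T)" using tree_sfloor[OF t] .
  have "\<exists>K. wf_graph K \<and> is_minor H K \<and> sp K + diameter T + 2 \<le> card (verts T)"
    using G1(1)[unfolded minor_step_def]
  proof (elim disjE exE bexE conjE)
    fix v assume v: "v \<in> verts T" "\<forall>e\<in>edges T. v \<notin> inc T e" "verts T \<noteq> {v}"
    then show ?thesis using tree_no_isolated[OF t] by blast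
  next
    fix e assume e: "e \<in> edges T" and G1e: "G1 = T\<lparr>edges := edges T - {e}\<rparr>"
    obtain vs es where P: "is_path T vs es" "length es = diameter T" "e \<notin> set es"
      using all e unfolding diametric_path_def by blast
    obtain K where K: "wf_graph K" "minor_step K (K\<lparr>edges := edges K - {e}\<rparr>)"
      "agree (T\<lparr>edges := edges T - {e}\<rparr>) (K\<lparr>edges := edges K - {e}\<rparr>)" "sp K + diameter T + 2 \<le> card (verts T)"
      using edge_case[OF t e P] by blast
    obtain B' where B': "minor_step\<^sup>*\<^sup>* (K\<lparr>edges := edges K - {e}\<rparr>) B'" "agree G' B'"
      using agree_star[OF G1(2)] K(3) G1e by blast
    have "minor_step\<^sup>*\<^sup>* K B'" using K(2) B'(1) by (rule converse_rtranclp_into_rtranclp)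
    moreover have "graph_iso H B'" using agree_iso[OF G'(2) B'(2)] .
    ultimately have "is_minor H K" unfolding is_minor_def by blast
    then show ?thesis using K by blast
  next
    fix e u w assume e: "e \<in> edges T" "inc T e = {u, w}" "u \<noteq> w"
      and G1c: "G1 = \<lparr>verts = verts T - {w}, edges = edges T - {e},
             inc = (\<lambda>f. (\<lambda>x. if x = w then u else x) ` inc T f)\<rparr>"
    have G1c': "G1 = contr T u w e" unfolding G1c contr_def by simp
    obtain vs es where P: "is_path T vs es" "length es = diameter T" "e \<notin> set es"
      using all e unfolding diametric_path_def by blast
    have "sp G1 + diameter T + 2 \<le> card (verts T)" using contr_case[OF t e P] G1c' by simp
    moreover have "wf_graph G1" using wf_step[OF wf G1(1)] .
    moreover have "is_minor H G1" unfolding is_minor_def using G1(2) G'(2) by blast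
    ultimately show ?thesis by blast
  qed
  then obtain K where K: "wf_graph K" "is_minor H K" "sp K + diameter T + 2 \<le> card (verts T)" by blast
  have "sfloor H \<le> sp K" using sfloor_le[OF K(1,2)] .
  then show "sfloor H \<noteq> sfloor T" using K(3) sT by linarith
qed

theorem corollary4p4:
  assumes "is_tree T"
  shows "sfloor_minor_minimal T \<longleftrightarrow>
    \<not> (\<exists>e\<in>edges T. \<forall>vs es. diametric_path T vs es \<longrightarrow> e \<in> set es)"
proof
  assume "sfloor_minor_minimal T"
  then show "\<not> (\<exists>e\<in>edges T. \<forall>vs es. diametric_path T vs es \<longrightarrow> e \<in> set es)"
    using common_edge_not_minimal[OF assms] by blast
next
  assume "\<not> (\<exists>e\<in>edges T. \<forall>vs es. diametric_path T vs es \<longrightarrow> e \<in> set es)"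
  then have "\<forall>e\<in>edges T. \<exists>vs es. diametric_path T vs es \<and> e \<notin> set es" by blast
  then show "sfloor_minor_minimal T" using no_common_minimal[OF assms] by blast
qed



end
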